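(* Let $S$ be a set of $n\ge 3$ points in the plane in general position (no four points of $S$ cocircular, no three collinear). For $i=0,\dots,n-3$ let $c_i$ be the number of 3-element subsets $\{a,b,c\}\subseteq S$ whose circumscribed circle contains exactly $i$ points of $S$ in its interior. Then for every $i\in\{0,\dots,n-3\}$, $$c_i+c_{n-i-3} = 2(i+1)(n-2-i).$$ In particular this sum is independent of the positions of the points of $S$.
   Context: Under the general position assumption every three points of $S$ determine a unique circle passing through them, and no other point of $S$ lies on it; the order of such a circle is the number of points of $S$ strictly inside it. *)

theory Defs
  imports "HOL-Analysis.Analysis"
begin

definition cocircular :: "complex set \<Rightarrow> bool" where
  "cocircular A \<longleftrightarrow> (\<exists>z r. \<forall>p\<in>A. dist p z = r)"

definition general_position :: "complex set \<Rightarrow> bool" where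
  "general_position S \<longleftrightarrow>
     (\<forall>T\<subseteq>S. card T = 3 \<longrightarrow> \<not> collinear T) \<and>
     (\<forall>T\<subseteq>S. card T = 4 \<longrightarrow> \<not> cocircular T)"

definition circumcenter :: "complex set \<Rightarrow> complex" where
  "circumcenter T = (THE z. \<forall>p\<in>T. \<forall>q\<in>T. dist p z = dist q z)"

definition circumradius :: "complex set \<Rightarrow> real" where
  "circumradius T = (SOME r. \<forall>p\<in>T. dist p (circumcenter T) = r)"

definition circle_order :: "complex set \<Rightarrow> complex set \<Rightarrow> nat" where
  "circle_order S T = card {p\<in>S. dist p (circumcenter T) < circumradius T}"

definition circle_count :: "complex set \<Rightarrow> nat \<Rightarrow> nat" where
  "circle_count S i = card {T. T \<subseteq> S \<and> card T = 3 \<and> circle_order S T = i}"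

end

theory Submission
  imports Defs
begin


definition ori :: "complex \<Rightarrow> complex \<Rightarrow> complex \<Rightarrow> real" where
  "ori a b c = (Re b - Re a) * (Im c - Im a) - (Im b - Im a) * (Re c - Re a)"

lemma ori_cyc: "ori a b c = ori b c a" by (simp add: ori_def algebra_simps)
lemma ori_swap: "ori a b c = - ori b a c" by (simp add: ori_def algebra_simps)
lemma ori_4: "ori b c d = ori a b c + ori a c d + ori a d b" by (simp add: ori_def algebra_simps)
lemma ori_same1[simp]: "ori a a c = 0" by (simp add: ori_def)
lemma ori_same2[simp]: "ori a b a = 0" by (simp add: ori_def)
lemma ori_same3[simp]: "ori a b b = 0" by (simp add: ori_def algebra_simps)

lemma affine_bary:
  fixes A B C :: real
  assumes "\<And>p. f p = A * Re p + B * Im p + C"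
  shows "f y * ori a b x = f a * ori y b x + f b * ori a y x + f x * ori a b y"
  unfolding assms ori_def by (simp add: algebra_simps)

definition zc :: "complex \<Rightarrow> complex \<Rightarrow> real \<Rightarrow> complex" where
  "zc a b t = Complex ((Re a + Re b - t * (Im b - Im a)) / 2) ((Im a + Im b + t * (Re b - Re a)) / 2)"

definition phi :: "complex \<Rightarrow> complex \<Rightarrow> real \<Rightarrow> complex \<Rightarrow> real" where
  "phi a b t p = - ((Re p - Re a) * (Re p - Re b) + (Im p - Im a) * (Im p - Im b)) + t * ori a b p"

definition tq :: "complex \<Rightarrow> complex \<Rightarrow> complex \<Rightarrow> real" where
  "tq a b q = ((Re q - Re a) * (Re q - Re b) + (Im q - Im a) * (Im q - Im b)) / ori a b q"

lemma dist_sq: "(dist p z)\<^sup>2 = (Re p - Re z)\<^sup>2 + (Im p - Im z)\<^sup>2"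
  by (simp add: dist_norm cmod_def)

lemma phi_eq: "phi a b t p = (dist a (zc a b t))\<^sup>2 - (dist p (zc a b t))\<^sup>2"
  unfolding dist_sq phi_def zc_def ori_def by (simp add: power2_eq_square algebra_simps)

lemma phi_q: "ori a b q \<noteq> 0 \<Longrightarrow> phi a b (tq a b q) q = 0"
  unfolding phi_def tq_def by simp

lemma phi_b: "phi a b t b = 0"
  unfolding phi_def ori_def by simp

lemma center_unique:
  assumes "ori a b q \<noteq> 0"
    and "dist a z = dist b z" "dist a z = dist q z"
    and "dist a w = dist b w" "dist a w = dist q w"
  shows "z = w"
proof -
  have e1: "(dist a z)\<^sup>2 = (dist b z)\<^sup>2" "(dist a z)\<^sup>2 = (dist q z)\<^sup>2"
     "(dist a w)\<^sup>2 = (dist b w)\<^sup>2" "(dist a w)\<^sup>2 = (dist q w)\<^sup>2" using assms by auto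
  define u1 where "u1 = Re z - Re w"
  define u2 where "u2 = Im z - Im w"
  have l1: "u1 * (Re b - Re a) + u2 * (Im b - Im a) = 0"
    using e1(1) e1(3) unfolding dist_sq u1_def u2_def by (simp add: power2_eq_square algebra_simps)
  have l2: "u1 * (Re q - Re a) + u2 * (Im q - Im a) = 0"
    using e1(2) e1(4) unfolding dist_sq u1_def u2_def by (simp add: power2_eq_square algebra_simps)
  have "u1 * ori a b q = (Im q - Im a) * (u1 * (Re b - Re a) + u2 * (Im b - Im a))
        - (Im b - Im a) * (u1 * (Re q - Re a) + u2 * (Im q - Im a))"
    unfolding ori_def by (simp add: algebra_simps)
  then have "u1 * ori a b q = 0" using l1 l2 by simp
  then have "u1 = 0" using assms(1) by simp
  have "u2 * ori a b q = (Re b - Re a) * (u1 * (Re q - Re a) + u2 * (Im q - Im a))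
        - (Re q - Re a) * (u1 * (Re b - Re a) + u2 * (Im b - Im a))"
    unfolding ori_def by (simp add: algebra_simps)
  then have "u2 * ori a b q = 0" using l1 l2 by simp
  then have "u2 = 0" using assms(1) by simp
  show ?thesis using \<open>u1 = 0\<close> \<open>u2 = 0\<close> unfolding u1_def u2_def by (simp add: complex_eq_iff)
qed

lemma circ_facts:
  fixes a b q :: complex
  assumes "ori a b q \<noteq> 0"
  shows "circumcenter {a,b,q} = zc a b (tq a b q)"
    and "circumradius {a,b,q} = dist a (zc a b (tq a b q))"
proof -
  define z where "z = zc a b (tq a b q)"
  have db: "dist b z = dist a z"
  proof -
    have "(dist b z)\<^sup>2 = (dist a z)\<^sup>2"
      using phi_eq[of a b "tq a b q" b] phi_b[of a b "tq a b q"] unfolding z_def by simp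
    then show ?thesis using power2_eq_iff_nonneg[of "dist b z" "dist a z"] by simp
  qed
  have dq: "dist q z = dist a z"
  proof -
    have "(dist q z)\<^sup>2 = (dist a z)\<^sup>2"
      using phi_eq[of a b "tq a b q" q] phi_q[OF assms] unfolding z_def by simp
    then show ?thesis using power2_eq_iff_nonneg[of "dist q z" "dist a z"] by simp
  qed
  have P: "\<forall>p\<in>{a,b,q}. \<forall>r\<in>{a,b,q}. dist p z = dist r z" using db dq by simp
  have "circumcenter {a,b,q} = z"
    unfolding circumcenter_def
  proof (rule the_equality)
    show "\<forall>p\<in>{a,b,q}. \<forall>r\<in>{a,b,q}. dist p z = dist r z" by (rule P)
  next
    fix w assume "\<forall>p\<in>{a,b,q}. \<forall>r\<in>{a,b,q}. dist p w = dist r w"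
    then have "dist a w = dist b w" "dist a w = dist q w" by blast+
    then show "w = z" using center_unique[OF assms _ _ db[symmetric] dq[symmetric], of w] by blast
  qed
  then show "circumcenter {a,b,q} = zc a b (tq a b q)" using z_def by simp
  have ex: "\<exists>r. \<forall>p\<in>{a,b,q}. dist p (circumcenter {a,b,q}) = r"
    using db dq \<open>circumcenter {a,b,q} = z\<close> by (intro exI[of _ "dist a z"]) simp
  have "\<forall>p\<in>{a,b,q}. dist p (circumcenter {a,b,q}) = circumradius {a,b,q}"
    unfolding circumradius_def by (rule someI_ex[OF ex])
  then show "circumradius {a,b,q} = dist a (zc a b (tq a b q))"
    using \<open>circumcenter {a,b,q} = z\<close> z_def by auto
qed

definition gT :: "complex set \<Rightarrow> complex \<Rightarrow> real" where
  "gT T p = (circumradius T)\<^sup>2 - (dist p (circumcenter T))\<^sup>2"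

definition ins :: "complex set \<Rightarrow> complex \<Rightarrow> bool" where
  "ins T p \<longleftrightarrow> dist p (circumcenter T) < circumradius T"

lemma gT_phi: fixes a b q :: complex shows "ori a b q \<noteq> 0 \<Longrightarrow> gT {a,b,q} p = phi a b (tq a b q) p"
  using circ_facts phi_eq unfolding gT_def by simp

lemma gT_form: "gT T p = - ((Re p)\<^sup>2 + (Im p)\<^sup>2) + (2 * Re (circumcenter T)) * Re p
   + (2 * Im (circumcenter T)) * Im p + ((circumradius T)\<^sup>2 - (Re (circumcenter T))\<^sup>2 - (Im (circumcenter T))\<^sup>2)"
  unfolding gT_def dist_sq by (simp add: power2_eq_square algebra_simps)

lemma gT_diff_affine: "\<exists>A B C. \<forall>p. gT T p - gT T' p = A * Re p + B * Im p + C"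
  apply (rule exI[of _ "2 * Re (circumcenter T) - 2 * Re (circumcenter T')"])
  apply (rule exI[of _ "2 * Im (circumcenter T) - 2 * Im (circumcenter T')"])
  apply (rule exI[of _ "((circumradius T)\<^sup>2 - (Re (circumcenter T))\<^sup>2 - (Im (circumcenter T))\<^sup>2)
      - ((circumradius T')\<^sup>2 - (Re (circumcenter T'))\<^sup>2 - (Im (circumcenter T'))\<^sup>2)"])
  by (simp add: gT_form[of T] gT_form[of T'] algebra_simps)

lemma tri_zero:
  assumes "ori a b q \<noteq> 0" "u \<in> {a,b,q}"
  shows "gT {a,b,q} u = 0"
proof -
  have "phi a b (tq a b q) u = 0"
    using assms phi_q[OF assms(1)] phi_b[of a b] by (auto simp: phi_def)
  then show ?thesis using gT_phi[OF assms(1)] by simp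
qed

lemma tri_ins:
  assumes "ori a b q \<noteq> 0"
  shows "ins {a,b,q} p \<longleftrightarrow> gT {a,b,q} p > 0"
proof -
  have r: "circumradius {a,b,q} \<ge> 0" using circ_facts[OF assms] by simp
  define d where "d = dist p (circumcenter {a,b,q})"
  define R where "R = circumradius {a,b,q}"
  have d: "d \<ge> 0" unfolding d_def by simp
  have "d < R \<longleftrightarrow> d\<^sup>2 < R\<^sup>2"
  proof
    assume "d < R" then show "d\<^sup>2 < R\<^sup>2" using d by (simp add: power_strict_mono)
  next
    assume "d\<^sup>2 < R\<^sup>2" then show "d < R" using r power_less_imp_less_base[of d 2 R] unfolding R_def by simp
  qed
  moreover have "ins {a,b,q} p \<longleftrightarrow> d < R" unfolding ins_def d_def R_def ..
  moreover have "gT {a,b,q} p = R\<^sup>2 - d\<^sup>2" unfolding gT_def d_def R_def ..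
  ultimately show ?thesis by linarith
qed



lemma ori_zero_collinear:
  assumes "ori a b c = 0" "a \<noteq> b"
  shows "collinear {a,b,c}"
proof -
  define N where "N = (Re b - Re a)\<^sup>2 + (Im b - Im a)\<^sup>2"
  have N: "N \<noteq> 0" using assms(2) unfolding N_def by (auto simp: complex_eq_iff)
  define s where "s = ((Re c - Re a) * (Re b - Re a) + (Im c - Im a) * (Im b - Im a)) / N"
  have o: "(Re b - Re a) * (Im c - Im a) = (Im b - Im a) * (Re c - Re a)"
    using assms(1) unfolding ori_def by simp
  have r: "Re c = (1 - s) * Re a + s * Re b"
  proof -
    have "s * (Re b - Re a) * N = ((Re c - Re a) * (Re b - Re a) + (Im c - Im a) * (Im b - Im a)) * (Re b - Re a)"
      unfolding s_def using N by simp
    also have "\<dots> = (Re c - Re a) * N + (Im b - Im a) * ((Re b - Re a) * (Im c - Im a) - (Im b - Im a) * (Re c - Re a))"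
      unfolding N_def power2_eq_square by (simp add: algebra_simps)
    also have "\<dots> = (Re c - Re a) * N" using o by simp
    finally have "s * (Re b - Re a) = Re c - Re a" using N by simp
    then show ?thesis by (simp add: algebra_simps)
  qed
  have i: "Im c = (1 - s) * Im a + s * Im b"
  proof -
    have "s * (Im b - Im a) * N = ((Re c - Re a) * (Re b - Re a) + (Im c - Im a) * (Im b - Im a)) * (Im b - Im a)"
      unfolding s_def using N by simp
    also have "\<dots> = (Im c - Im a) * N - (Re b - Re a) * ((Re b - Re a) * (Im c - Im a) - (Im b - Im a) * (Re c - Re a))"
      unfolding N_def power2_eq_square by (simp add: algebra_simps)
    also have "\<dots> = (Im c - Im a) * N" using o by simp
    finally have "s * (Im b - Im a) = Im c - Im a" using N by simp
    then show ?thesis by (simp add: algebra_simps)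
  qed
  have "c = (1 - s) *\<^sub>R a + s *\<^sub>R b" using r i by (simp add: complex_eq_iff scaleR_conv_of_real)
  then have "collinear {a,c,b}" unfolding collinear_3_expand by (intro disjI2 exI[of _ "1 - s"]) simp
  then show ?thesis by (simp add: insert_commute)
qed

definition gp :: "complex set \<Rightarrow> bool" where
  "gp W \<longleftrightarrow> (\<forall>a\<in>W. \<forall>b\<in>W. \<forall>c\<in>W. a \<noteq> b \<longrightarrow> b \<noteq> c \<longrightarrow> a \<noteq> c \<longrightarrow> ori a b c \<noteq> 0)
     \<and> (\<forall>T. T \<subseteq> W \<longrightarrow> card T = 3 \<longrightarrow> (\<forall>p\<in>W-T. gT T p \<noteq> 0))"

lemma gp_mono: "gp W \<Longrightarrow> V \<subseteq> W \<Longrightarrow> gp V"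
  unfolding gp_def by blast

lemma gp_ori: "gp W \<Longrightarrow> a \<in> W \<Longrightarrow> b \<in> W \<Longrightarrow> c \<in> W \<Longrightarrow> a \<noteq> b \<Longrightarrow> b \<noteq> c \<Longrightarrow> a \<noteq> c \<Longrightarrow> ori a b c \<noteq> 0"
  unfolding gp_def by blast

lemma tri_rep:
  assumes "gp W" "T \<subseteq> W" "card T = 3"
  obtains a b q where "T = {a,b,q}" "a \<noteq> b" "b \<noteq> q" "a \<noteq> q" "ori a b q \<noteq> 0"
proof -
  obtain a b q where T: "T = {a,b,q}" "a \<noteq> b" "b \<noteq> q" "a \<noteq> q"
    using assms(3) unfolding card_3_iff by blast
  have "a \<in> W" "b \<in> W" "q \<in> W" using assms(2) T(1) by blast+
  then have "ori a b q \<noteq> 0" using gp_ori[OF assms(1)] T(2-4) by blast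
  then show ?thesis using that T by blast
qed

lemma tri_zero': "gp W \<Longrightarrow> T \<subseteq> W \<Longrightarrow> card T = 3 \<Longrightarrow> u \<in> T \<Longrightarrow> gT T u = 0"
proof -
  assume a: "gp W" "T \<subseteq> W" "card T = 3" "u \<in> T"
  obtain x y z where "T = {x,y,z}" "ori x y z \<noteq> 0" using tri_rep[OF a(1-3)] by blast
  then show ?thesis using tri_zero a(4) by blast
qed

lemma tri_ins': "gp W \<Longrightarrow> T \<subseteq> W \<Longrightarrow> card T = 3 \<Longrightarrow> ins T p \<longleftrightarrow> gT T p > 0"
proof -
  assume a: "gp W" "T \<subseteq> W" "card T = 3"
  obtain x y z where "T = {x,y,z}" "ori x y z \<noteq> 0" using tri_rep[OF a(1-3)] by blast
  then show ?thesis using tri_ins by blast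
qed

lemma tri_nz: "gp W \<Longrightarrow> T \<subseteq> W \<Longrightarrow> card T = 3 \<Longrightarrow> p \<in> W - T \<Longrightarrow> gT T p \<noteq> 0"
  unfolding gp_def by blast

lemma tri_ge: "gp W \<Longrightarrow> T \<subseteq> W \<Longrightarrow> card T = 3 \<Longrightarrow> p \<in> W \<Longrightarrow> gT T p \<ge> 0 \<longleftrightarrow> (p \<in> T \<or> ins T p)"
proof -
  assume a: "gp W" "T \<subseteq> W" "card T = 3" "p \<in> W"
  show ?thesis
  proof (cases "p \<in> T")
    case True then show ?thesis using tri_zero'[OF a(1-3) True] by simp
  next
    case False
    then have "gT T p \<noteq> 0" using tri_nz[OF a(1-3)] a(4) by blast
    then show ?thesis using tri_ins'[OF a(1-3), of p] False by auto
  qed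
qed

lemma gp_general:
  assumes "general_position S"
  shows "gp S"
proof -
  have GC: "\<not> collinear T" if "T \<subseteq> S" "card T = 3" for T
    using assms that unfolding general_position_def by blast
  have GQ: "\<not> cocircular T" if "T \<subseteq> S" "card T = 4" for T
    using assms that unfolding general_position_def by blast
  have A: "ori a b c \<noteq> 0" if abc: "a \<in> S" "b \<in> S" "c \<in> S" "a \<noteq> b" "b \<noteq> c" "a \<noteq> c" for a b c
  proof
    assume "ori a b c = 0"
    then have "collinear {a,b,c}" using ori_zero_collinear abc(4) by blast
    moreover have "card {a,b,c} = 3" using abc by simp
    moreover have "{a,b,c} \<subseteq> S" using abc by simp
    ultimately show False using GC by blast
  qed
  have B: "gT T p \<noteq> 0" if T: "T \<subseteq> S" "card T = 3" and p: "p \<in> S - T" for T p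
  proof
    assume g0: "gT T p = 0"
    obtain a b q where Tq: "T = {a,b,q}" "a \<noteq> b" "b \<noteq> q" "a \<noteq> q" using T(2) unfolding card_3_iff by blast
    have o: "ori a b q \<noteq> 0" using A T(1) Tq by simp
    define z where "z = circumcenter T"
    define r where "r = circumradius T"
    have r0: "r \<ge> 0" unfolding r_def Tq using circ_facts[OF o] by simp
    have on: "dist u z = r" if "u \<in> insert p T" for u
    proof -
      have "gT T u = 0"
      proof (cases "u = p")
        case True then show ?thesis using g0 by simp
      next
        case False then have "u \<in> {a,b,q}" using that Tq by simp
        then show ?thesis using tri_zero[OF o] Tq(1) by simp
      qed
      then have "(dist u z)\<^sup>2 = r\<^sup>2" unfolding gT_def z_def r_def by simp
      then show ?thesis using r0 power2_eq_iff_nonneg[of "dist u z" r] by simp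
    qed
    have "cocircular (insert p T)" unfolding cocircular_def using on by blast
    moreover have fT: "finite T" using T(2) card.infinite by fastforce
    moreover have "card (insert p T) = 4" using fT p T(2) by simp
    moreover have "insert p T \<subseteq> S" using T p by blast
    ultimately show False using GQ by blast
  qed
  show ?thesis unfolding gp_def using A B by blast
qed



definition inside_tri :: "complex \<Rightarrow> complex \<Rightarrow> complex \<Rightarrow> complex \<Rightarrow> bool" where
  "inside_tri p x y z \<longleftrightarrow> (ori x y p > 0 \<and> ori y z p > 0 \<and> ori z x p > 0) \<or>
                          (ori x y p < 0 \<and> ori y z p < 0 \<and> ori z x p < 0)"

definition FT :: "complex set \<Rightarrow> complex set set" where
  "FT W = {T. T \<subseteq> W \<and> card T = 3 \<and> (\<forall>p\<in>W-T. ins T p)}"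

definition HP :: "complex set \<Rightarrow> (complex \<times> complex) set" where
  "HP W = {(a,b). a \<in> W \<and> b \<in> W \<and> a \<noteq> b \<and> (\<forall>p\<in>W-{a,b}. ori a b p > 0)}"

lemma inside_distinct: "inside_tri p x y z \<Longrightarrow> x \<noteq> y \<and> y \<noteq> z \<and> x \<noteq> z \<and> p \<noteq> x \<and> p \<noteq> y \<and> p \<noteq> z"
  unfolding inside_tri_def by (auto simp: ori_def)

lemma bary:
  assumes "inside_tri p x y z"
  obtains al be ga :: real where "al > 0" "be > 0" "ga > 0" "al + be + ga = 1"
    "Re p = al * Re x + be * Re y + ga * Re z" "Im p = al * Im x + be * Im y + ga * Im z"
proof -
  define D where "D = ori x y z"
  have sD: "D = ori y z p + ori z x p + ori x y p" unfolding D_def ori_def by (simp add: algebra_simps)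
  have rD: "D * Re p = ori y z p * Re x + ori z x p * Re y + ori x y p * Re z"
    unfolding D_def ori_def by (simp add: algebra_simps)
  have iD: "D * Im p = ori y z p * Im x + ori z x p * Im y + ori x y p * Im z"
    unfolding D_def ori_def by (simp add: algebra_simps)
  have pos: "ori y z p / D > 0 \<and> ori z x p / D > 0 \<and> ori x y p / D > 0"
    using assms unfolding inside_tri_def sD by (auto intro: divide_pos_pos divide_neg_neg)
  then have D0: "D \<noteq> 0" by auto
  show ?thesis
  proof (rule that[of "ori y z p / D" "ori z x p / D" "ori x y p / D"])
    have "ori y z p / D + ori z x p / D + ori x y p / D = (ori y z p + ori z x p + ori x y p) / D"
      by (simp add: add_divide_distrib)
    also have "\<dots> = 1" using D0 sD[symmetric] by simp
    finally show "ori y z p / D + ori z x p / D + ori x y p / D = 1" .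
    show "Re p = ori y z p / D * Re x + ori z x p / D * Re y + ori x y p / D * Re z"
      using D0 rD by (simp add: field_simps)
    show "Im p = ori y z p / D * Im x + ori z x p / D * Im y + ori x y p / D * Im z"
      using D0 iD by (simp add: field_simps)
  qed (use pos in auto)
qed

lemma affine_comb:
  assumes "\<And>u. f u = A * Re u + B * Im u + C" "al + be + ga = 1"
    "Re p = al * Re x + be * Re y + ga * Re z" "Im p = al * Im x + be * Im y + ga * Im z"
  shows "f p = al * f x + be * f y + ga * f z"
proof -
  have "f p = A * (al * Re x + be * Re y + ga * Re z) + B * (al * Im x + be * Im y + ga * Im z) + C * (al + be + ga)"
    using assms by simp
  then show ?thesis using assms(1) by (simp add: algebra_simps)
qed

lemma ori_aff: "\<exists>A B C. \<forall>u. ori a b u = A * Re u + B * Im u + C"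
  apply (rule exI[of _ "- (Im b - Im a)"], rule exI[of _ "Re b - Re a"],
         rule exI[of _ "- (Re b - Re a) * Im a + (Im b - Im a) * Re a"])
  by (simp add: ori_def algebra_simps)

lemma sq_comb:
  fixes X Y Z al be ga :: real
  assumes "al + be + ga = 1"
  shows "- (al * X + be * Y + ga * Z)\<^sup>2 = al * (- X\<^sup>2) + be * (- Y\<^sup>2) + ga * (- Z\<^sup>2)
     + al * be * (X - Y)\<^sup>2 + be * ga * (Y - Z)\<^sup>2 + ga * al * (Z - X)\<^sup>2"
proof -
  have g: "ga = 1 - al - be" using assms by simp
  show ?thesis unfolding g by (simp add: power2_eq_square algebra_simps)
qed

lemma gT_comb:
  assumes "al + be + ga = 1"
    "Re p = al * Re x + be * Re y + ga * Re z" "Im p = al * Im x + be * Im y + ga * Im z"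
  shows "gT T p = al * gT T x + be * gT T y + ga * gT T z
     + al * be * ((Re x - Re y)\<^sup>2 + (Im x - Im y)\<^sup>2) + be * ga * ((Re y - Re z)\<^sup>2 + (Im y - Im z)\<^sup>2)
     + ga * al * ((Re z - Re x)\<^sup>2 + (Im z - Im x)\<^sup>2)"
proof -
  define A where "A = 2 * Re (circumcenter T)"
  define B where "B = 2 * Im (circumcenter T)"
  define C where "C = (circumradius T)\<^sup>2 - (Re (circumcenter T))\<^sup>2 - (Im (circumcenter T))\<^sup>2"
  have G: "gT T u = (- (Re u)\<^sup>2) + (- (Im u)\<^sup>2) + (A * Re u + B * Im u + C)" for u
    unfolding gT_form A_def B_def C_def by simp
  have L: "A * Re p + B * Im p + C = al * (A * Re x + B * Im x + C) + be * (A * Re y + B * Im y + C) + ga * (A * Re z + B * Im z + C)"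
    by (rule affine_comb[where f = "\<lambda>u. A * Re u + B * Im u + C"]) (use assms in auto)
  have R: "- (Re p)\<^sup>2 = al * (- (Re x)\<^sup>2) + be * (- (Re y)\<^sup>2) + ga * (- (Re z)\<^sup>2)
     + al * be * (Re x - Re y)\<^sup>2 + be * ga * (Re y - Re z)\<^sup>2 + ga * al * (Re z - Re x)\<^sup>2"
    unfolding assms(2) by (rule sq_comb[OF assms(1)])
  have I: "- (Im p)\<^sup>2 = al * (- (Im x)\<^sup>2) + be * (- (Im y)\<^sup>2) + ga * (- (Im z)\<^sup>2)
     + al * be * (Im x - Im y)\<^sup>2 + be * ga * (Im y - Im z)\<^sup>2 + ga * al * (Im z - Im x)\<^sup>2"
    unfolding assms(3) by (rule sq_comb[OF assms(1)])
  show ?thesis unfolding G using L R I by (simp add: algebra_simps)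
qed

lemma sqd_pos: "x \<noteq> y \<Longrightarrow> (Re x - Re y)\<^sup>2 + (Im x - Im y)\<^sup>2 > 0"
proof -
  assume "x \<noteq> y"
  then have "Re x \<noteq> Re y \<or> Im x \<noteq> Im y" by (simp add: complex_eq_iff)
  then show ?thesis
  proof
    assume "Re x \<noteq> Re y" then have "(Re x - Re y)\<^sup>2 > 0" by simp
    then show ?thesis by (simp add: add_pos_nonneg)
  next
    assume "Im x \<noteq> Im y" then have "(Im x - Im y)\<^sup>2 > 0" by simp
    then show ?thesis by (simp add: add_nonneg_pos)
  qed
qed

lemma gT_inside_pos:
  assumes "inside_tri p x y z" "gT T x \<ge> 0" "gT T y \<ge> 0" "gT T z \<ge> 0"
  shows "gT T p > 0"
proof -
  obtain al be ga where c: "al > 0" "be > 0" "ga > 0" "al + be + ga = 1"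
    "Re p = al * Re x + be * Re y + ga * Re z" "Im p = al * Im x + be * Im y + ga * Im z"
    using bary[OF assms(1)] by blast
  have "x \<noteq> y" using inside_distinct[OF assms(1)] by simp
  then have "(Re x - Re y)\<^sup>2 + (Im x - Im y)\<^sup>2 > 0"
    by (rule sqd_pos)
  then have "al * be * ((Re x - Re y)\<^sup>2 + (Im x - Im y)\<^sup>2) > 0" using c by simp
  moreover have "be * ga * ((Re y - Re z)\<^sup>2 + (Im y - Im z)\<^sup>2) \<ge> 0" using c by simp
  moreover have "ga * al * ((Re z - Re x)\<^sup>2 + (Im z - Im x)\<^sup>2) \<ge> 0" using c by simp
  moreover have "al * gT T x \<ge> 0" "be * gT T y \<ge> 0" "ga * gT T z \<ge> 0" using c assms by simp_all
  ultimately show ?thesis unfolding gT_comb[OF c(4-6), of T] by linarith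
qed

lemma ori_inside_pos:
  assumes "inside_tri p x y z" "ori a b x \<ge> 0" "ori a b y \<ge> 0" "ori a b z \<ge> 0"
    "ori a b x > 0 \<or> ori a b y > 0 \<or> ori a b z > 0"
  shows "ori a b p > 0"
proof -
  obtain al be ga where c: "al > 0" "be > 0" "ga > 0" "al + be + ga = 1"
    "Re p = al * Re x + be * Re y + ga * Re z" "Im p = al * Im x + be * Im y + ga * Im z"
    using bary[OF assms(1)] by blast
  obtain A B C where f: "\<forall>u. ori a b u = A * Re u + B * Im u + C" using ori_aff by blast
  have e: "ori a b p = al * ori a b x + be * ori a b y + ga * ori a b z"
    by (rule affine_comb[where A = A and B = B and C = C]) (use f c in auto)
  have "al * ori a b x \<ge> 0" "be * ori a b y \<ge> 0" "ga * ori a b z \<ge> 0" using c assms by simp_all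
  moreover have "al * ori a b x > 0 \<or> be * ori a b y > 0 \<or> ga * ori a b z > 0" using c assms(5) by auto
  ultimately show ?thesis unfolding e by linarith
qed



lemma remove_interior:
  assumes gp: "gp W" and p: "p \<in> W" and xyz: "x \<in> W" "y \<in> W" "z \<in> W" and ins: "inside_tri p x y z"
  shows "FT W = FT (W - {p})" "HP W = HP (W - {p})"
proof -
  have dis: "x \<noteq> y" "y \<noteq> z" "x \<noteq> z" "p \<noteq> x" "p \<noteq> y" "p \<noteq> z" using inside_distinct[OF ins] by auto
  have gp': "gp (W - {p})" using gp_mono[OF gp] by blast
  show "FT W = FT (W - {p})"
  proof
    show "FT W \<subseteq> FT (W - {p})"
    proof
      fix T assume T: "T \<in> FT W"
      then have T1: "T \<subseteq> W" "card T = 3" "\<forall>q\<in>W-T. ins T q" unfolding FT_def by auto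
      have ge: "gT T u \<ge> 0" if "u \<in> W" for u using tri_ge[OF gp T1(1,2) that] T1(3) that by blast
      have "p \<notin> T"
      proof
        assume "p \<in> T"
        then have "gT T p = 0" using tri_zero'[OF gp T1(1,2)] by blast
        moreover have "gT T p > 0" using gT_inside_pos[OF ins ge[OF xyz(1)] ge[OF xyz(2)] ge[OF xyz(3)]] .
        ultimately show False by simp
      qed
      then show "T \<in> FT (W - {p})" using T1 unfolding FT_def by auto
    qed
  next
    show "FT (W - {p}) \<subseteq> FT W"
    proof
      fix T assume T: "T \<in> FT (W - {p})"
      then have T1: "T \<subseteq> W - {p}" "card T = 3" "\<forall>q\<in>(W - {p})-T. ins T q" unfolding FT_def by auto
      have ge: "gT T u \<ge> 0" if "u \<in> W - {p}" for u using tri_ge[OF gp' T1(1,2) that] T1(3) that by blast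
      have "gT T p > 0" using gT_inside_pos[OF ins ge ge ge] xyz dis by blast
      then have "ins T p" using tri_ins'[OF gp' T1(1,2)] by blast
      then show "T \<in> FT W" using T1 unfolding FT_def by auto
    qed
  qed
  show "HP W = HP (W - {p})"
  proof
    show "HP W \<subseteq> HP (W - {p})"
    proof
      fix e assume e: "e \<in> HP W"
      obtain a b where ab: "e = (a,b)" by (cases e)
      have H: "a \<in> W" "b \<in> W" "a \<noteq> b" "\<forall>q\<in>W-{a,b}. ori a b q > 0" using e ab unfolding HP_def by auto
      have geq: "ori a b u \<ge> 0" if "u \<in> W" for u
      proof (cases "u = a \<or> u = b")
        case True then show ?thesis by auto
      next
        case False then have "u \<in> W - {a,b}" using that by simp
        then show ?thesis using H(4) by (simp add: less_imp_le)
      qed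
      have some: "ori a b x > 0 \<or> ori a b y > 0 \<or> ori a b z > 0"
      proof -
        have "x \<notin> {a,b} \<or> y \<notin> {a,b} \<or> z \<notin> {a,b}" using dis by auto
        then show ?thesis using H(4) xyz by auto
      qed
      have pos: "ori a b p > 0" using ori_inside_pos[OF ins geq[OF xyz(1)] geq[OF xyz(2)] geq[OF xyz(3)] some] .
      then have "a \<noteq> p" "b \<noteq> p" by auto
      then show "e \<in> HP (W - {p})" using H ab unfolding HP_def by auto
    qed
  next
    show "HP (W - {p}) \<subseteq> HP W"
    proof
      fix e assume e: "e \<in> HP (W - {p})"
      obtain a b where ab: "e = (a,b)" by (cases e)
      have H: "a \<in> W - {p}" "b \<in> W - {p}" "a \<noteq> b" "\<forall>q\<in>(W - {p})-{a,b}. ori a b q > 0" using e ab unfolding HP_def by auto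
      have geq: "ori a b u \<ge> 0" if "u \<in> W - {p}" for u
      proof (cases "u = a \<or> u = b")
        case True then show ?thesis by auto
      next
        case False then have "u \<in> (W - {p}) - {a,b}" using that by blast
        then have "ori a b u > 0" using H(4) by blast
        then show ?thesis by simp
      qed
      have some: "ori a b x > 0 \<or> ori a b y > 0 \<or> ori a b z > 0"
      proof -
        have "x \<notin> {a,b} \<or> y \<notin> {a,b} \<or> z \<notin> {a,b}" using dis by auto
        then show ?thesis using H(4) xyz dis by auto
      qed
      have pos: "ori a b p > 0" using ori_inside_pos[OF ins geq geq geq some] xyz dis by blast
      then show "e \<in> HP W" using H ab unfolding HP_def by auto
    qed
  qed
qed

definition cvx :: "complex set \<Rightarrow> bool" where
  "cvx W \<longleftrightarrow> (\<forall>p\<in>W. \<forall>x\<in>W. \<forall>y\<in>W. \<forall>z\<in>W. \<not> inside_tri p x y z)"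

lemma cvx_mono: "cvx W \<Longrightarrow> V \<subseteq> W \<Longrightarrow> cvx V" unfolding cvx_def by blast

lemma ori_I: "ori a b x - ori a b y = ori x y b - ori x y a" unfolding ori_def by (simp add: algebra_simps)

lemma S1:
  assumes gp: "gp W" and cv: "cvx W" and W: "a \<in> W" "b \<in> W" "x \<in> W" "y \<in> W"
    and s: "ori a b x > 0" "ori a b y < 0"
  shows "ori x y b > 0" "ori x y a < 0"
proof -
  have d: "a \<noteq> b" "x \<noteq> y" "x \<noteq> a" "x \<noteq> b" "y \<noteq> a" "y \<noteq> b" using s by auto
  have n1: "ori x y a \<noteq> 0" using gp_ori[OF gp W(3) W(4) W(1)] d by auto
  have n2: "ori x y b \<noteq> 0" using gp_ori[OF gp W(3) W(4) W(2)] d by auto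
  have I: "ori a b x - ori a b y = ori x y b - ori x y a" by (rule ori_I)
  have c1: "ori b x a = ori a b x" by (metis ori_cyc)
  have c2: "ori y b a = - ori a b y" by (metis ori_cyc ori_swap)
  have c3: "ori a y b = - ori a b y" by (metis ori_cyc ori_swap)
  have c4: "ori y x b = - ori x y b" by (metis ori_swap)
  have c5: "ori x a b = ori a b x" by (metis ori_cyc)
  have A: "\<not> ori x y a > 0"
  proof
    assume "ori x y a > 0"
    then have "inside_tri a b x y" unfolding inside_tri_def using c1 c2 s by auto
    then show False using cv W unfolding cvx_def by blast
  qed
  have B: "\<not> ori x y b < 0"
  proof
    assume "ori x y b < 0"
    then have "inside_tri b a y x" unfolding inside_tri_def using c3 c4 c5 s by auto
    then show False using cv W unfolding cvx_def by blast
  qed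
  show "ori x y b > 0" "ori x y a < 0" using A B n1 n2 I s by linarith+
qed



lemma hull_succ:
  assumes fin: "finite W" and gp: "gp W" and cv: "cvx W" and a: "a \<in> W" and ne: "W - {a} \<noteq> {}"
  shows "\<exists>b\<in>W. b \<noteq> a \<and> (\<forall>p\<in>W-{a,b}. ori a b p > 0)"
proof -
  define neg where "neg b = card {c\<in>W. ori a b c < 0}" for b
  define B where "B = W - {a}"
  have fB: "finite B" "B \<noteq> {}" using fin ne unfolding B_def by auto
  define m where "m = Min (neg ` B)"
  have "m \<in> neg ` B" unfolding m_def using fB by simp
  then obtain b where b: "b \<in> B" "neg b = m" by blast
  have mn: "neg b \<le> neg b'" if "b' \<in> B" for b' using b fB that unfolding m_def by simp
  have bW: "b \<in> W" "b \<noteq> a" using b unfolding B_def by auto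
  have "\<forall>p\<in>W-{a,b}. ori a b p > 0"
  proof (rule ccontr)
    assume "\<not> (\<forall>p\<in>W-{a,b}. ori a b p > 0)"
    then obtain c where c: "c \<in> W" "c \<noteq> a" "c \<noteq> b" "\<not> ori a b c > 0" by blast
    have "ori a b c \<noteq> 0" using gp_ori[OF gp a bW(1) c(1)] bW c by auto
    then have cneg: "ori a b c < 0" using c(4) by simp
    have sub: "{d\<in>W. ori a c d < 0} \<subseteq> {d\<in>W. ori a b d < 0} - {c}"
    proof
      fix d assume d: "d \<in> {d\<in>W. ori a c d < 0}"
      then have dW: "d \<in> W" and dn: "ori a c d < 0" by auto
      have "d \<noteq> c" using dn by auto
      have "ori a c b = - ori a b c" by (metis ori_cyc ori_swap)
      then have "d \<noteq> b" using dn cneg by auto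
      have "d \<noteq> a" using dn by auto
      have "ori a b d \<noteq> 0" using gp_ori[OF gp a bW(1) dW] \<open>d \<noteq> b\<close> \<open>d \<noteq> a\<close> bW by auto
      moreover have "\<not> ori a b d > 0"
      proof
        assume pos: "ori a b d > 0"
        have e1: "ori b c a = ori a b c" by (metis ori_cyc)
        have e2: "ori c d a = ori a c d" by (metis ori_cyc)
        have e3: "ori d b a = - ori a b d" by (metis ori_cyc ori_swap)
        have "inside_tri a b c d" unfolding inside_tri_def using e1 e2 e3 pos cneg dn by auto
        then show False using cv a bW(1) c(1) dW unfolding cvx_def by blast
      qed
      ultimately show "d \<in> {d\<in>W. ori a b d < 0} - {c}" using dW \<open>d \<noteq> c\<close> by auto
    qed
    have "c \<in> {d\<in>W. ori a b d < 0}" using c(1) cneg by simp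
    then have "card ({d\<in>W. ori a b d < 0} - {c}) < card {d\<in>W. ori a b d < 0}"
      using card_Diff1_less[of "{d\<in>W. ori a b d < 0}" c] fin by fastforce
    moreover have "card {d\<in>W. ori a c d < 0} \<le> card ({d\<in>W. ori a b d < 0} - {c})"
      by (rule card_mono[OF _ sub]) (use fin in simp)
    ultimately have "neg c < neg b" unfolding neg_def by linarith
    moreover have "c \<in> B" unfolding B_def using c by auto
    ultimately show False using mn[of c] by linarith
  qed
  then show ?thesis using bW by blast
qed

lemma HP_card_cvx:
  assumes fin: "finite W" and gp: "gp W" and cv: "cvx W" and c3: "card W \<ge> 3"
  shows "card (HP W) = card W"
proof -
  have "bij_betw fst (HP W) W"
    unfolding bij_betw_def
  proof
    show "inj_on fst (HP W)"
    proof (rule inj_onI)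
      fix e e' assume e: "e \<in> HP W" "e' \<in> HP W" "fst e = fst e'"
      obtain a b where ab: "e = (a,b)" by (cases e)
      obtain a' b' where ab': "e' = (a',b')" by (cases e')
      have aa: "a' = a" using e ab ab' by simp
      have H1: "a \<in> W" "b \<in> W" "a \<noteq> b" "\<forall>q\<in>W-{a,b}. ori a b q > 0" using e(1) ab unfolding HP_def by auto
      have H2: "b' \<in> W" "a \<noteq> b'" "\<forall>q\<in>W-{a,b'}. ori a b' q > 0" using e(2) ab' aa unfolding HP_def by auto
      have "b = b'"
      proof (rule ccontr)
        assume "b \<noteq> b'"
        then have "ori a b b' > 0" "ori a b' b > 0" using H1 H2 by auto
        moreover have "ori a b' b = - ori a b b'" by (metis ori_cyc ori_swap)
        ultimately show False by simp
      qed
      then show "e = e'" using ab ab' aa by simp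
    qed
    show "fst ` HP W = W"
    proof
      show "fst ` HP W \<subseteq> W" unfolding HP_def by auto
      show "W \<subseteq> fst ` HP W"
      proof
        fix a assume a: "a \<in> W"
        have "W - {a} \<noteq> {}"
        proof
          assume "W - {a} = {}"
          then have "W = {a}" using a by blast
          then show False using c3 by simp
        qed
        then obtain b where "b \<in> W" "b \<noteq> a" "\<forall>p\<in>W-{a,b}. ori a b p > 0" using hull_succ[OF fin gp cv a] by blast
        then have "(a,b) \<in> HP W" using a unfolding HP_def by auto
        then show "a \<in> fst ` HP W" by force
      qed
    qed
  qed
  then show ?thesis by (rule bij_betw_same_card)
qed

lemma F_exists:
  assumes fin: "finite W" and gp: "gp W" and a: "a \<in> W" and b: "b \<in> W" "a \<noteq> b"
    and hull: "\<forall>p\<in>W-{a,b}. ori a b p > 0" and ne: "W - {a,b} \<noteq> {}"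
  shows "\<exists>q\<in>W-{a,b}. {a,b,q} \<in> FT W"
proof -
  define Q where "Q = W - {a,b}"
  have fQ: "finite Q" "Q \<noteq> {}" using fin ne unfolding Q_def by auto
  define m where "m = Max (tq a b ` Q)"
  have "m \<in> tq a b ` Q" unfolding m_def using fQ by simp
  then obtain q where q: "q \<in> Q" "tq a b q = m" by blast
  have mx: "tq a b p \<le> tq a b q" if "p \<in> Q" for p using q fQ that unfolding m_def by simp
  have qW: "q \<in> W" "q \<noteq> a" "q \<noteq> b" using q unfolding Q_def by auto
  have oq: "ori a b q > 0" using hull qW by auto
  then have oq0: "ori a b q \<noteq> 0" by simp
  have T3: "{a,b,q} \<subseteq> W" "card {a,b,q} = 3" using a b qW by auto
  have "\<forall>p\<in>W-{a,b,q}. ins {a,b,q} p"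
  proof
    fix p assume p: "p \<in> W - {a,b,q}"
    have op: "ori a b p > 0" using hull p by auto
    have "gT {a,b,q} p = phi a b (tq a b q) p" by (rule gT_phi[OF oq0])
    also have "\<dots> = (tq a b q - tq a b p) * ori a b p"
      unfolding phi_def tq_def using op by (simp add: field_simps)
    finally have ge: "gT {a,b,q} p \<ge> 0" using mx[of p] p op unfolding Q_def by simp
    have "gT {a,b,q} p \<noteq> 0" using tri_nz[OF gp T3] p by blast
    then have "gT {a,b,q} p > 0" using ge by simp
    then show "ins {a,b,q} p" using tri_ins[OF oq0] by blast
  qed
  then have "{a,b,q} \<in> FT W" using T3 unfolding FT_def by blast
  then show ?thesis using q unfolding Q_def by blast
qed



lemma key_id:
  "(gT T y - gT T0 y) * ori a b x = (gT T a - gT T0 a) * ori y b x + (gT T b - gT T0 b) * ori a y x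
     + (gT T x - gT T0 x) * ori a b y"
proof -
  obtain A B C where f: "\<forall>p. gT T p - gT T0 p = A * Re p + B * Im p + C" using gT_diff_affine by blast
  show ?thesis by (rule affine_bary[where f = "\<lambda>p. gT T p - gT T0 p" and A = A and B = B and C = C]) (use f in simp)
qed

lemma sgn1:
  fixes hy ox ha hb P1 P2 hx oy :: real
  assumes "hy < 0" "ox > 0" "ha \<ge> 0" "hb \<ge> 0" "P1 > 0" "P2 > 0" "hx \<le> 0" "oy < 0"
    "hy * ox = ha * P1 + hb * P2 + hx * oy"
  shows False
proof -
  have "hy * ox < 0" using assms(1,2) by (simp add: mult_neg_pos)
  moreover have "ha * P1 \<ge> 0" "hb * P2 \<ge> 0" using assms(3-6) by simp_all
  moreover have "hx * oy \<ge> 0" using assms(7,8) by (simp add: mult_nonpos_nonpos)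
  ultimately show False using assms(9) by linarith
qed

lemma sgn2:
  fixes hy ox ha hb Q1 Q2 hx oy :: real
  assumes "hx \<le> 0" "oy < 0" "ha \<ge> 0" "hb \<ge> 0" "Q1 < 0" "Q2 < 0" "hy < 0" "ox > 0"
    "hx * oy = ha * Q1 + hb * Q2 + hy * ox"
  shows False
proof -
  have "hx * oy \<ge> 0" using assms(1,2) by (simp add: mult_nonpos_nonpos)
  moreover have "ha * Q1 \<le> 0" "hb * Q2 \<le> 0" using assms(3-6) by (simp_all add: mult_nonneg_nonpos)
  moreover have "hy * ox < 0" using assms(7,8) by (simp add: mult_neg_pos)
  ultimately show False using assms(9) by linarith
qed

lemma card2: "card {a,b} \<le> 2" by (cases "a = b") auto

lemma FT_ge: "gp W \<Longrightarrow> T \<in> FT V \<Longrightarrow> V \<subseteq> W \<Longrightarrow> u \<in> V \<Longrightarrow> gT T u \<ge> 0"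
proof -
  assume a: "gp W" "T \<in> FT V" "V \<subseteq> W" "u \<in> V"
  have gV: "gp V" using gp_mono a by blast
  have T: "T \<subseteq> V" "card T = 3" "\<forall>q\<in>V-T. ins T q" using a(2) unfolding FT_def by auto
  show ?thesis using tri_ge[OF gV T(1,2) a(4)] T(3) a(4) by blast
qed

lemma split_FT:
  assumes fin: "finite W" and gp: "gp W" and cv: "cvx W" and T0: "{a,b,c} \<in> FT W"
    and oc: "ori a b c > 0" and d: "d \<in> W" "ori a b d < 0"
  shows "FT W = FT ({p\<in>W. ori a b p > 0} \<union> {a,b}) \<union> FT ({p\<in>W. ori a b p < 0} \<union> {a,b})"
    and "FT ({p\<in>W. ori a b p > 0} \<union> {a,b}) \<inter> FT ({p\<in>W. ori a b p < 0} \<union> {a,b}) = {}"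
proof -
  define L where "L = {p\<in>W. ori a b p > 0}"
  define R where "R = {p\<in>W. ori a b p < 0}"
  have abc: "a \<in> W" "b \<in> W" "c \<in> W" using T0 unfolding FT_def by auto
  have dis: "a \<noteq> b" "a \<noteq> c" "b \<noteq> c" using oc by auto
  have T0p: "{a,b,c} \<subseteq> W" "card {a,b,c} = 3" "\<forall>q\<in>W-{a,b,c}. ins {a,b,c} q" using T0 unfolding FT_def by auto
  define g0 where "g0 = gT {a,b,c}"
  have g0ge: "g0 u \<ge> 0" if "u \<in> W" for u unfolding g0_def using FT_ge[OF gp T0 _ that] by blast
  have g0pos: "g0 u > 0" if "u \<in> W - {a,b,c}" for u
    unfolding g0_def using T0p(3) that tri_ins'[OF gp T0p(1,2)] by blast
  have g0z: "g0 u = 0" if "u \<in> {a,b,c}" for u unfolding g0_def using tri_zero'[OF gp T0p(1,2) that] .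
  have cls: "p \<in> {a,b} \<or> p \<in> L \<or> p \<in> R" if "p \<in> W" for p
  proof (cases "p \<in> {a,b}")
    case False
    then have "ori a b p \<noteq> 0" using gp_ori[OF gp abc(1,2) that] dis by auto
    then show ?thesis unfolding L_def R_def using that by auto
  qed simp
  have LR: "L \<inter> R = {}" unfolding L_def R_def by auto
  have abL: "a \<notin> L" "b \<notin> L" "a \<notin> R" "b \<notin> R" unfolding L_def R_def by auto
  have cL: "c \<in> L" unfolding L_def using abc oc by auto
  have RT0: "y \<notin> {a,b,c}" if "y \<in> R" for y using that cL LR abL by auto
  have LW: "L \<union> {a,b} \<subseteq> W" "R \<union> {a,b} \<subseteq> W" unfolding L_def R_def using abc by auto
  have I: "FT W \<subseteq> FT (L \<union> {a,b}) \<union> FT (R \<union> {a,b})"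
  proof
    fix T assume T: "T \<in> FT W"
    have Tp: "T \<subseteq> W" "card T = 3" "\<forall>q\<in>W-T. ins T q" using T unfolding FT_def by auto
    have side: "T \<subseteq> L \<union> {a,b} \<or> T \<subseteq> R \<union> {a,b}"
    proof (rule ccontr)
      assume "\<not> ?thesis"
      then obtain x y where xy: "x \<in> T" "x \<notin> R \<union> {a,b}" "y \<in> T" "y \<notin> L \<union> {a,b}" by blast
      have xL: "x \<in> L" using cls[of x] xy Tp by auto
      have yR: "y \<in> R" using cls[of y] xy Tp by auto
      have xW: "x \<in> W" "y \<in> W" using xL yR unfolding L_def R_def by auto
      have ox: "ori a b x > 0" using xL unfolding L_def by simp
      have oy: "ori a b y < 0" using yR unfolding R_def by simp
      have s: "ori x y b > 0" "ori x y a < 0" using S1[OF gp cv abc(1,2) xW ox oy] by auto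
      have P1: "ori y b x > 0" using s by (metis ori_cyc)
      have P2: "ori a y x > 0" using s by (metis ori_cyc ori_swap neg_0_less_iff_less)
      have hy: "gT T y - g0 y < 0" using tri_zero'[OF gp Tp(1,2) xy(3)] g0pos[of y] RT0[OF yR] xW by auto
      have hx: "gT T x - g0 x \<le> 0" using tri_zero'[OF gp Tp(1,2) xy(1)] g0ge[of x] xW by auto
      have ha: "gT T a - g0 a \<ge> 0" using FT_ge[OF gp T _ abc(1)] g0z by auto
      have hb: "gT T b - g0 b \<ge> 0" using FT_ge[OF gp T _ abc(2)] g0z by auto
      show False using sgn1[OF hy ox ha hb P1 P2 hx oy] key_id[of T y "{a,b,c}" a b x] unfolding g0_def by blast
    qed
    show "T \<in> FT (L \<union> {a,b}) \<union> FT (R \<union> {a,b})"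
    proof (cases "T \<subseteq> L \<union> {a,b}")
      case True
      then have "T \<in> FT (L \<union> {a,b})" using Tp LW unfolding FT_def by blast
      then show ?thesis by blast
    next
      case False
      then have "T \<subseteq> R \<union> {a,b}" using side by blast
      then have "T \<in> FT (R \<union> {a,b})" using Tp LW unfolding FT_def by blast
      then show ?thesis by blast
    qed
  qed
  have II: "FT (L \<union> {a,b}) \<subseteq> FT W"
  proof
    fix T assume T: "T \<in> FT (L \<union> {a,b})"
    have Tp: "T \<subseteq> L \<union> {a,b}" "card T = 3" "\<forall>q\<in>(L \<union> {a,b})-T. ins T q" using T unfolding FT_def by auto
    have TW: "T \<subseteq> W" using Tp LW by blast
    have "ins T y" if y: "y \<in> W - T" for y
    proof (cases "y \<in> L \<union> {a,b}")
      case True then show ?thesis using Tp y by blast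
    next
      case False
      then have yR: "y \<in> R" using cls[of y] y by auto
      show ?thesis
      proof (cases "T = {a,b,c}")
        case True then show ?thesis using T0p(3) y by blast
      next
        case False
        have "\<not> T \<subseteq> {a,b,c}"
        proof
          assume "T \<subseteq> {a,b,c}"
          then have "T = {a,b,c}" using Tp(2) T0p(2) by (simp add: card_subset_eq)
          then show False using False by simp
        qed
        then obtain x where x: "x \<in> T" "x \<notin> {a,b,c}" by blast
        have xL: "x \<in> L" using x Tp by auto
        have xW: "x \<in> W" "y \<in> W" using xL yR unfolding L_def R_def by auto
        have ox: "ori a b x > 0" using xL unfolding L_def by simp
        have oy: "ori a b y < 0" using yR unfolding R_def by simp
        have s: "ori x y b > 0" "ori x y a < 0" using S1[OF gp cv abc(1,2) xW ox oy] by auto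
        have P1: "ori y b x > 0" using s by (metis ori_cyc)
        have P2: "ori a y x > 0" using s by (metis ori_cyc ori_swap neg_0_less_iff_less)
        show "ins T y"
        proof (rule ccontr)
          assume "\<not> ins T y"
          then have "gT T y \<le> 0" using tri_ins'[OF gp TW Tp(2)] by simp
          then have hy: "gT T y - g0 y < 0" using g0pos[of y] RT0[OF yR] xW by auto
          have hx: "gT T x - g0 x \<le> 0" using tri_zero'[OF gp TW Tp(2) x(1)] g0pos[of x] x xW by auto
          have ha: "gT T a - g0 a \<ge> 0" using FT_ge[OF gp T LW(1)] g0z by auto
          have hb: "gT T b - g0 b \<ge> 0" using FT_ge[OF gp T LW(1)] g0z by auto
          show False using sgn1[OF hy ox ha hb P1 P2 hx oy] key_id[of T y "{a,b,c}" a b x] unfolding g0_def by blast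
        qed
      qed
    qed
    then show "T \<in> FT W" using TW Tp unfolding FT_def by blast
  qed
  have III: "FT (R \<union> {a,b}) \<subseteq> FT W"
  proof
    fix T assume T: "T \<in> FT (R \<union> {a,b})"
    have Tp: "T \<subseteq> R \<union> {a,b}" "card T = 3" "\<forall>q\<in>(R \<union> {a,b})-T. ins T q" using T unfolding FT_def by auto
    have TW: "T \<subseteq> W" using Tp LW by blast
    have "ins T x" if x: "x \<in> W - T" for x
    proof (cases "x \<in> R \<union> {a,b}")
      case True then show ?thesis using Tp x by blast
    next
      case False
      then have xL: "x \<in> L" using cls[of x] x by auto
      have "\<not> T \<subseteq> {a,b}"
      proof
        assume "T \<subseteq> {a,b}"
        then have "card T \<le> 2" using card_mono[of "{a,b}" T] card2[of a b] by simp
        then show False using Tp(2) by simp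
      qed
      then obtain y where y: "y \<in> T" "y \<notin> {a,b}" by blast
      have yR: "y \<in> R" using y Tp by auto
      have xW: "x \<in> W" "y \<in> W" using xL yR unfolding L_def R_def by auto
      have ox: "ori a b x > 0" using xL unfolding L_def by simp
      have oy: "ori a b y < 0" using yR unfolding R_def by simp
      have s: "ori x y b > 0" "ori x y a < 0" using S1[OF gp cv abc(1,2) xW ox oy] by auto
      have Q1: "ori x b y < 0" using s by (metis ori_cyc ori_swap neg_less_0_iff_less)
      have Q2: "ori a x y < 0" using s by (metis ori_cyc)
      show "ins T x"
      proof (rule ccontr)
        assume "\<not> ins T x"
        then have "gT T x \<le> 0" using tri_ins'[OF gp TW Tp(2)] by simp
        then have hx: "gT T x - g0 x \<le> 0" using g0ge[of x] xW by auto
        have hy: "gT T y - g0 y < 0" using tri_zero'[OF gp TW Tp(2) y(1)] g0pos[of y] RT0[OF yR] xW by auto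
        have ha: "gT T a - g0 a \<ge> 0" using FT_ge[OF gp T LW(2)] g0z by auto
        have hb: "gT T b - g0 b \<ge> 0" using FT_ge[OF gp T LW(2)] g0z by auto
        show False using sgn2[OF hx oy ha hb Q1 Q2 hy ox] key_id[of T x "{a,b,c}" a b y] unfolding g0_def by blast
      qed
    qed
    then show "T \<in> FT W" using TW Tp unfolding FT_def by blast
  qed
  show "FT W = FT ({p\<in>W. ori a b p > 0} \<union> {a,b}) \<union> FT ({p\<in>W. ori a b p < 0} \<union> {a,b})"
    using I II III unfolding L_def R_def by blast
  show "FT ({p\<in>W. ori a b p > 0} \<union> {a,b}) \<inter> FT ({p\<in>W. ori a b p < 0} \<union> {a,b}) = {}"
  proof (rule ccontr)
    assume "\<not> ?thesis"
    then obtain T where T: "T \<in> FT (L \<union> {a,b})" "T \<in> FT (R \<union> {a,b})" unfolding L_def R_def by blast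
    then have "T \<subseteq> {a,b}" using LR unfolding FT_def by blast
    then have "card T \<le> 2" using card_mono[of "{a,b}" T] card2[of a b] by simp
    then show False using T(1) unfolding FT_def by simp
  qed
qed



lemma FT_finite: "finite W \<Longrightarrow> finite (FT W)"
  by (rule finite_subset[of _ "Pow W"]) (auto simp: FT_def)

lemma split_count:
  assumes fin: "finite W" and gp: "gp W" and cv: "cvx W" and T0: "{a,b,c} \<in> FT W"
    and oc: "ori a b c > 0" and d: "d \<in> W" "ori a b d < 0"
    and IH: "\<And>V. V \<subseteq> W \<Longrightarrow> card V < card W \<Longrightarrow> card V \<ge> 3 \<Longrightarrow> card (FT V) = card V - 2"
  shows "card (FT W) = card W - 2"
proof -
  define L where "L = {p\<in>W. ori a b p > 0} \<union> {a,b}"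
  define R where "R = {p\<in>W. ori a b p < 0} \<union> {a,b}"
  have sp: "FT W = FT L \<union> FT R" "FT L \<inter> FT R = {}"
    using split_FT[OF fin gp cv T0 oc d] unfolding L_def R_def by auto
  have abc: "a \<in> W" "b \<in> W" "c \<in> W" using T0 unfolding FT_def by auto
  have dis: "a \<noteq> b" "a \<noteq> c" "b \<noteq> c" "d \<noteq> a" "d \<noteq> b" "d \<noteq> c" using oc d by auto
  have LW: "L \<subseteq> W" "R \<subseteq> W" unfolding L_def R_def using abc by auto
  have fL: "finite L" "finite R" using LW fin finite_subset by auto
  have dL: "d \<notin> L" unfolding L_def using d dis by auto
  have cR: "c \<notin> R" unfolding R_def using oc dis by auto
  have cL: "card L < card W" using psubset_card_mono[OF fin] LW dL d by blast
  have cR': "card R < card W" using psubset_card_mono[OF fin] LW cR abc by blast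
  have L3: "card L \<ge> 3"
  proof -
    have "{a,b,c} \<subseteq> L" unfolding L_def using abc oc by auto
    then have "card {a,b,c} \<le> card L" using fL card_mono by blast
    then show ?thesis using dis by simp
  qed
  have R3: "card R \<ge> 3"
  proof -
    have "{a,b,d} \<subseteq> R" unfolding R_def using abc d by auto
    then have "card {a,b,d} \<le> card R" using fL card_mono by blast
    then show ?thesis using dis by simp
  qed
  have UI: "L \<union> R = W" "L \<inter> R = {a,b}"
  proof -
    show "L \<union> R = W"
    proof
      show "L \<union> R \<subseteq> W" using LW by blast
      show "W \<subseteq> L \<union> R"
      proof
        fix p assume p: "p \<in> W"
        show "p \<in> L \<union> R"
        proof (cases "p \<in> {a,b}")
          case True then show ?thesis unfolding L_def by blast
        next
          case False
          then have "ori a b p \<noteq> 0" using gp_ori[OF gp abc(1,2) p] dis by auto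
          then show ?thesis unfolding L_def R_def using p by auto
        qed
      qed
    qed
    show "L \<inter> R = {a,b}" unfolding L_def R_def by auto
  qed
  have "card L + card R = card W + 2"
    using card_Un_Int[OF fL] UI dis by simp
  moreover have "card (FT W) = card (FT L) + card (FT R)"
    using sp card_Un_disjoint[OF FT_finite[OF fL(1)] FT_finite[OF fL(2)]] by simp
  moreover have "card (FT L) = card L - 2" using IH[OF LW(1) cL L3] .
  moreover have "card (FT R) = card R - 2" using IH[OF LW(2) cR' R3] .
  ultimately show ?thesis using L3 R3 by linarith
qed

lemma cvx_count:
  assumes "finite W" "gp W" "cvx W" "card W \<ge> 3"
  shows "card (FT W) = card W - 2"
  using assms
proof (induction "card W" arbitrary: W rule: less_induct)
  case less
  note fin = less.prems(1) and gp = less.prems(2) and cv = less.prems(3) and c3 = less.prems(4)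
  have IH: "card (FT V) = card V - 2" if "V \<subseteq> W" "card V < card W" "card V \<ge> 3" for V
  proof -
    have "finite V" using finite_subset[OF that(1) fin] .
    moreover have "gp V" using gp_mono[OF gp that(1)] .
    moreover have "cvx V" using cvx_mono[OF cv that(1)] .
    ultimately show ?thesis using less.hyps[OF that(2)] that(3) by blast
  qed
  show ?case
  proof (cases "card W = 3")
    case True
    have "FT W = {W}"
    proof
      show "FT W \<subseteq> {W}"
      proof
        fix T assume "T \<in> FT W"
        then have "T \<subseteq> W" "card T = 3" unfolding FT_def by auto
        then have "T = W" using True fin by (simp add: card_subset_eq)
        then show "T \<in> {W}" by simp
      qed
      show "{W} \<subseteq> FT W" using True unfolding FT_def by auto
    qed
    then show ?thesis using True by simp
  next
    case False
    then have c4: "card W \<ge> 4" using c3 by simp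
    have "W \<noteq> {}" using c3 by (intro notI) simp
    then obtain a where a: "a \<in> W" by blast
    have ne1: "W - {a} \<noteq> {}"
    proof
      assume "W - {a} = {}" then have "W = {a}" using a by blast
      then show False using c3 by simp
    qed
    obtain b where b: "b \<in> W" "b \<noteq> a" "\<forall>p\<in>W-{a,b}. ori a b p > 0"
      using hull_succ[OF fin gp cv a ne1] by blast
    have ne2: "W - {a,b} \<noteq> {}"
    proof
      assume "W - {a,b} = {}" then have "W \<subseteq> {a,b}" by blast
      then have "card W \<le> 2" using card_mono[OF _ \<open>W \<subseteq> {a,b}\<close>] card2[of a b] by simp
      then show False using c3 by simp
    qed
    obtain q where q: "q \<in> W - {a,b}" "{a,b,q} \<in> FT W"
      using F_exists[OF fin gp a b(1) b(2)[symmetric] b(3) ne2] by blast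
    have oq: "ori a b q > 0" using q(1) b(3) by blast
    have ne3: "W - {a,b,q} \<noteq> {}"
    proof
      assume "W - {a,b,q} = {}" then have "W \<subseteq> {a,b,q}" by blast
      then have "card W \<le> card {a,b,q}" using card_mono[of "{a,b,q}" W] by simp
      also have "\<dots> \<le> 3" by (simp add: card_insert_if)
      finally show False using c4 by simp
    qed
    then obtain d where d: "d \<in> W" "d \<noteq> a" "d \<noteq> b" "d \<noteq> q" by blast
    have qW: "q \<in> W" "q \<noteq> a" "q \<noteq> b" using q(1) by auto
    have od: "ori a b d > 0" using b(3) d by blast
    have o1: "ori b q d \<noteq> 0" using gp_ori[OF gp b(1) qW(1) d(1)] d qW by auto
    have o2: "ori q a d \<noteq> 0" using gp_ori[OF gp qW(1) a d(1)] d qW by auto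
    show ?thesis
    proof (cases "ori b q d < 0")
      case True
      have "{b,q,a} = {a,b,q}" by blast
      then have T: "{b,q,a} \<in> FT W" using q(2) by simp
      have oc': "ori b q a > 0" using oq by (metis ori_cyc)
      show ?thesis by (rule split_count[OF fin gp cv T oc' d(1) True IH])
    next
      case False
      then have p1: "ori b q d > 0" using o1 by simp
      show ?thesis
      proof (cases "ori q a d < 0")
        case True
        have "{q,a,b} = {a,b,q}" by blast
        then have T: "{q,a,b} \<in> FT W" using q(2) by simp
        have oc': "ori q a b > 0" using oq by (metis ori_cyc)
        show ?thesis by (rule split_count[OF fin gp cv T oc' d(1) True IH])
      next
        case False
        then have p2: "ori q a d > 0" using o2 by simp
        have "inside_tri d a b q" unfolding inside_tri_def using od p1 p2 by simp
        then show ?thesis using cv a b(1) qW(1) d(1) unfolding cvx_def by blast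
      qed
    qed
  qed
qed

theorem F_hull:
  assumes "finite W" "gp W" "card W \<ge> 3"
  shows "int (card (FT W)) = int (card (HP W)) - 2"
  using assms
proof (induction "card W" arbitrary: W rule: less_induct)
  case less
  note fin = less.prems(1) and gp = less.prems(2) and c3 = less.prems(3)
  show ?case
  proof (cases "cvx W")
    case True
    then show ?thesis using cvx_count[OF fin gp True c3] HP_card_cvx[OF fin gp True c3] c3 by simp
  next
    case False
    then obtain p x y z where pxyz: "p \<in> W" "x \<in> W" "y \<in> W" "z \<in> W" "inside_tri p x y z"
      unfolding cvx_def by blast
    have e: "FT W = FT (W - {p})" "HP W = HP (W - {p})" using remove_interior[OF gp pxyz] by auto
    have dis: "x \<noteq> y" "y \<noteq> z" "x \<noteq> z" "p \<noteq> x" "p \<noteq> y" "p \<noteq> z" using inside_distinct[OF pxyz(5)] by auto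
    have "{x,y,z} \<subseteq> W - {p}" using pxyz dis by auto
    then have "card {x,y,z} \<le> card (W - {p})" using fin by (simp add: card_mono)
    then have c3': "card (W - {p}) \<ge> 3" using dis by simp
    have lt: "card (W - {p}) < card W" using card_Diff1_less[OF fin pxyz(1)] .
    have "int (card (FT (W - {p}))) = int (card (HP (W - {p}))) - 2"
    proof -
      have "finite (W - {p})" using fin by simp
      moreover have "gp (W - {p})" using gp_mono[OF gp] by blast
      ultimately show ?thesis using less.hyps[OF lt] c3' by blast
    qed
    then show ?thesis using e by simp
  qed
qed



lemma choose2_nat: "2 * (m choose 2) = m * (m - 1)"
proof (induction m)
  case 0 then show ?case by simp
next
  case (Suc m)
  have "Suc m choose 2 = (m choose 2) + m"
    by (simp add: numeral_2_eq_2)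
  then show ?case using Suc by (cases m) (auto simp: algebra_simps)
qed

lemma vander_gen:
  "(\<Sum>i\<le>m. (i choose k) * ((m - i) choose j)) = Suc m choose (k + j + 1)"
proof (induction j arbitrary: m)
  case 0
  show ?case using sum_choose_upper[of k m] by simp
next
  case (Suc j)
  note IHj = Suc.IH
  show ?case
  proof (induction m)
    case 0 then show ?case by simp
  next
    case (Suc m)
    have "(\<Sum>i\<le>Suc m. (i choose k) * ((Suc m - i) choose Suc j))
        = (\<Sum>i\<le>m. (i choose k) * ((Suc m - i) choose Suc j))"
      by simp
    also have "\<dots> = (\<Sum>i\<le>m. (i choose k) * ((m - i) choose Suc j) + (i choose k) * ((m - i) choose j))"
    proof (rule sum.cong[OF refl])
      fix i assume "i \<in> {..m}"
      then have "Suc m - i = Suc (m - i)" by simp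
      then show "(i choose k) * ((Suc m - i) choose Suc j) = (i choose k) * ((m - i) choose Suc j) + (i choose k) * ((m - i) choose j)"
        by (simp add: algebra_simps)
    qed
    also have "\<dots> = (\<Sum>i\<le>m. (i choose k) * ((m - i) choose Suc j)) + (\<Sum>i\<le>m. (i choose k) * ((m - i) choose j))"
      by (simp add: sum.distrib)
    also have "\<dots> = (Suc m choose (k + Suc j + 1)) + (Suc m choose (k + j + 1))"
      using Suc.IH IHj[of m] by simp
    also have "\<dots> = Suc (Suc m) choose (k + Suc j + 1)" by simp
    finally show ?case .
  qed
qed

lemma uniq_moments:
  fixes X :: "nat \<Rightarrow> int"
  assumes "\<And>k. k \<le> N \<Longrightarrow> (\<Sum>i\<le>N. X i * int (i choose k)) = 0"
  shows "\<And>i. i \<le> N \<Longrightarrow> X i = 0"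
proof -
  have main: "\<forall>i. j \<le> i \<longrightarrow> i \<le> N \<longrightarrow> X i = 0" if "j \<le> Suc N" for j
    using that
  proof (induction j rule: inc_induct)
    case base then show ?case by simp
  next
    case (step k)
    have kN: "k \<le> N" using step.hyps by simp
    have "(\<Sum>i\<le>N. X i * int (i choose k)) = (\<Sum>i\<le>N. if i = k then X k else 0)"
    proof (rule sum.cong[OF refl])
      fix i assume i: "i \<in> {..N}"
      show "X i * int (i choose k) = (if i = k then X k else 0)"
      proof (cases "i < k")
        case True then show ?thesis by simp
      next
        case False
        show ?thesis
        proof (cases "i = k")
          case True then show ?thesis by simp
        next
          case False
          then have "Suc k \<le> i" using \<open>\<not> i < k\<close> by simp
          then have "X i = 0" using step.IH i by simp
          then show ?thesis using False by simp
        qed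
      qed
    qed
    also have "\<dots> = X k" using kN by simp
    finally have "X k = 0" using assms[OF kN] by simp
    then show ?case using step.IH by (metis Suc_leI le_neq_implies_less)
  qed
  fix i assume "i \<le> N"
  then show "X i = 0" using main[of 0] by simp
qed



definition In :: "complex set \<Rightarrow> complex set \<Rightarrow> complex set" where
  "In S T = {p\<in>S. ins T p}"
definition Tri :: "complex set \<Rightarrow> complex set set" where
  "Tri S = {T. T \<subseteq> S \<and> card T = 3}"
definition Sub :: "complex set \<Rightarrow> nat \<Rightarrow> complex set set" where
  "Sub S m = {W. W \<subseteq> S \<and> card W = m}"
definition Pr :: "complex set \<Rightarrow> (complex \<times> complex) set" where
  "Pr S = {(a,b). a \<in> S \<and> b \<in> S \<and> a \<noteq> b}"
definition Lft :: "complex set \<Rightarrow> complex \<Rightarrow> complex \<Rightarrow> complex set" where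
  "Lft S a b = {p\<in>S. ori a b p > 0}"

lemma finite_Sub: "finite S \<Longrightarrow> finite (Sub S m)"
  by (rule finite_subset[of _ "Pow S"]) (auto simp: Sub_def)
lemma finite_Tri: "finite S \<Longrightarrow> finite (Tri S)"
  by (rule finite_subset[of _ "Pow S"]) (auto simp: Tri_def)
lemma finite_Pr: "finite S \<Longrightarrow> finite (Pr S)"
  by (rule finite_subset[of _ "S \<times> S"]) (auto simp: Pr_def)

lemma In_disj: "gp S \<Longrightarrow> T \<in> Tri S \<Longrightarrow> In S T \<inter> T = {}"
proof -
  assume a: "gp S" "T \<in> Tri S"
  have T: "T \<subseteq> S" "card T = 3" using a(2) unfolding Tri_def by auto
  show ?thesis
  proof (rule ccontr)
    assume "In S T \<inter> T \<noteq> {}"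
    then obtain p where p: "p \<in> T" "ins T p" unfolding In_def by blast
    then show False using tri_zero'[OF a(1) T p(1)] tri_ins'[OF a(1) T, of p] by simp
  qed
qed

lemma momA:
  assumes fin: "finite S" and gp: "gp S"
  shows "(\<Sum>T\<in>Tri S. card (In S T) choose k) = (\<Sum>W\<in>Sub S (k+3). card (FT W))"
proof -
  define A where "A = (SIGMA T:Tri S. {K. K \<subseteq> In S T \<and> card K = k})"
  define B where "B = (SIGMA W:Sub S (k+3). FT W)"
  have fIn: "finite (In S T)" for T using fin unfolding In_def by simp
  have "(\<Sum>T\<in>Tri S. card (In S T) choose k) = (\<Sum>T\<in>Tri S. card {K. K \<subseteq> In S T \<and> card K = k})"
    using n_subsets[OF fIn] by simp
  also have "\<dots> = card A" unfolding A_def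
    by (rule card_SigmaI[symmetric]) (use fin finite_Tri fIn in auto)
  also have "card A = card B"
  proof (rule bij_betw_same_card[of "\<lambda>(T,K). (T \<union> K, T)"])
    show "bij_betw (\<lambda>(T,K). (T \<union> K, T)) A B"
    proof (rule bij_betw_byWitness[where f' = "\<lambda>(W,T). (T, W - T)"])
      show "\<forall>a\<in>A. (\<lambda>(W,T). (T, W - T)) ((\<lambda>(T,K). (T \<union> K, T)) a) = a"
      proof
        fix a assume "a \<in> A"
        then obtain T K where a: "a = (T,K)" "T \<in> Tri S" "K \<subseteq> In S T" unfolding A_def by blast
        have "K \<inter> T = {}" using In_disj[OF gp a(2)] a(3) by blast
        then show "(\<lambda>(W,T). (T, W - T)) ((\<lambda>(T,K). (T \<union> K, T)) a) = a" using a(1) by auto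
      qed
      show "\<forall>b\<in>B. (\<lambda>(T,K). (T \<union> K, T)) ((\<lambda>(W,T). (T, W - T)) b) = b"
      proof
        fix b assume "b \<in> B"
        then obtain W T where b: "b = (W,T)" "T \<in> FT W" unfolding B_def by blast
        have "T \<subseteq> W" using b(2) unfolding FT_def by auto
        then show "(\<lambda>(T,K). (T \<union> K, T)) ((\<lambda>(W,T). (T, W - T)) b) = b" using b(1) by auto
      qed
      show "(\<lambda>(T,K). (T \<union> K, T)) ` A \<subseteq> B"
      proof
        fix x assume "x \<in> (\<lambda>(T,K). (T \<union> K, T)) ` A"
        then obtain a where a: "a \<in> A" "x = (\<lambda>(T,K). (T \<union> K, T)) a" by blast
        obtain T K where TK: "a = (T,K)" by (cases a)
        have x: "x = (T \<union> K, T)" "T \<in> Tri S" "K \<subseteq> In S T" "card K = k"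
          using a TK unfolding A_def by auto
        have T: "T \<subseteq> S" "card T = 3" using x(2) unfolding Tri_def by auto
        have KS: "K \<subseteq> S" using x(3) unfolding In_def by auto
        have disj: "T \<inter> K = {}" using In_disj[OF gp x(2)] x(3) by blast
        have fT: "finite T" "finite K" using T KS fin finite_subset by auto
        have cW: "card (T \<union> K) = k + 3" using card_Un_disjoint[OF fT disj] T x(4) by simp
        have "T \<union> K \<in> Sub S (k+3)" unfolding Sub_def using T KS cW by auto
        moreover have "T \<in> FT (T \<union> K)" unfolding FT_def using T x(3) unfolding In_def by auto
        ultimately show "x \<in> B" unfolding B_def x(1) by blast
      qed
      show "(\<lambda>(W,T). (T, W - T)) ` B \<subseteq> A"
      proof
        fix x assume "x \<in> (\<lambda>(W,T). (T, W - T)) ` B"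
        then obtain a where a: "a \<in> B" "x = (\<lambda>(W,T). (T, W - T)) a" by blast
        obtain W T where WT: "a = (W,T)" by (cases a)
        have x: "x = (T, W - T)" "W \<in> Sub S (k+3)" "T \<in> FT W" using a WT unfolding B_def by auto
        have W: "W \<subseteq> S" "card W = k + 3" using x(2) unfolding Sub_def by auto
        have T: "T \<subseteq> W" "card T = 3" "\<forall>p\<in>W-T. ins T p" using x(3) unfolding FT_def by auto
        have fW: "finite W" using W fin finite_subset by auto
        have "T \<in> Tri S" unfolding Tri_def using T W by auto
        moreover have "W - T \<subseteq> In S T" unfolding In_def using T W by auto
        moreover have "card (W - T) = k" using card_Diff_subset[OF finite_subset[OF T(1) fW] T(1)] W T by simp
        ultimately show "x \<in> A" unfolding A_def x(1) by blast
      qed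
    qed
  qed
  also have "card B = (\<Sum>W\<in>Sub S (k+3). card (FT W))" unfolding B_def
    by (rule card_SigmaI) (use fin finite_Sub FT_finite finite_subset in \<open>auto simp: Sub_def\<close>)
  finally show ?thesis .
qed

lemma momB:
  assumes fin: "finite S"
  shows "(\<Sum>W\<in>Sub S (j+2). card (HP W)) = (\<Sum>e\<in>Pr S. card (Lft S (fst e) (snd e)) choose j)"
proof -
  define A where "A = (SIGMA W:Sub S (j+2). HP W)"
  define B where "B = (SIGMA e:Pr S. {K. K \<subseteq> Lft S (fst e) (snd e) \<and> card K = j})"
  have fL: "finite (Lft S a b)" for a b using fin unfolding Lft_def by simp
  have fHP: "finite (HP W)" if "W \<subseteq> S" for W
    by (rule finite_subset[of _ "W \<times> W"]) (use that fin finite_subset in \<open>auto simp: HP_def\<close>)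
  have "(\<Sum>W\<in>Sub S (j+2). card (HP W)) = card A" unfolding A_def
    by (rule card_SigmaI[symmetric]) (use fin finite_Sub fHP in \<open>auto simp: Sub_def\<close>)
  also have "card A = card B"
  proof (rule bij_betw_same_card[of "\<lambda>(W,e). (e, W - {fst e, snd e})"])
    show "bij_betw (\<lambda>(W,e). (e, W - {fst e, snd e})) A B"
    proof (rule bij_betw_byWitness[where f' = "\<lambda>(e,K). (K \<union> {fst e, snd e}, e)"])
      show "\<forall>a\<in>A. (\<lambda>(e,K). (K \<union> {fst e, snd e}, e)) ((\<lambda>(W,e). (e, W - {fst e, snd e})) a) = a"
      proof
        fix a assume "a \<in> A"
        then obtain W x y where a: "a = (W,(x,y))" "(x,y) \<in> HP W" unfolding A_def by auto
        have "x \<in> W" "y \<in> W" using a(2) unfolding HP_def by auto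
        then show "(\<lambda>(e,K). (K \<union> {fst e, snd e}, e)) ((\<lambda>(W,e). (e, W - {fst e, snd e})) a) = a"
          using a(1) by auto
      qed
      show "\<forall>b\<in>B. (\<lambda>(W,e). (e, W - {fst e, snd e})) ((\<lambda>(e,K). (K \<union> {fst e, snd e}, e)) b) = b"
      proof
        fix b assume "b \<in> B"
        then obtain x y K where b: "b = ((x,y),K)" "K \<subseteq> Lft S x y" unfolding B_def by auto
        have "x \<notin> K" "y \<notin> K" using b(2) unfolding Lft_def by auto
        then show "(\<lambda>(W,e). (e, W - {fst e, snd e})) ((\<lambda>(e,K). (K \<union> {fst e, snd e}, e)) b) = b"
          using b(1) by auto
      qed
      show "(\<lambda>(W,e). (e, W - {fst e, snd e})) ` A \<subseteq> B"
      proof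
        fix z assume "z \<in> (\<lambda>(W,e). (e, W - {fst e, snd e})) ` A"
        then obtain a where a: "a \<in> A" "z = (\<lambda>(W,e). (e, W - {fst e, snd e})) a" by blast
        obtain W x y where Wxy: "a = (W,(x,y))" by (cases a) auto
        have z: "z = ((x,y), W - {x,y})" "W \<in> Sub S (j+2)" "(x,y) \<in> HP W"
          using a Wxy unfolding A_def by auto
        have W: "W \<subseteq> S" "card W = j + 2" using z(2) unfolding Sub_def by auto
        have H: "x \<in> W" "y \<in> W" "x \<noteq> y" "\<forall>p\<in>W-{x,y}. ori x y p > 0" using z(3) unfolding HP_def by auto
        have fW: "finite W" using W fin finite_subset by auto
        have "(x,y) \<in> Pr S" unfolding Pr_def using H W by auto
        moreover have "W - {x,y} \<subseteq> Lft S x y" unfolding Lft_def using H W by auto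
        moreover have "card (W - {x,y}) = j" using card_Diff_subset[of "{x,y}" W] H W fW by simp
        ultimately show "z \<in> B" unfolding B_def z(1) by auto
      qed
      show "(\<lambda>(e,K). (K \<union> {fst e, snd e}, e)) ` B \<subseteq> A"
      proof
        fix z assume "z \<in> (\<lambda>(e,K). (K \<union> {fst e, snd e}, e)) ` B"
        then obtain a where a: "a \<in> B" "z = (\<lambda>(e,K). (K \<union> {fst e, snd e}, e)) a" by blast
        obtain x y K where xyK: "a = ((x,y),K)" by (cases a) auto
        have z: "z = (K \<union> {x,y}, (x,y))" "(x,y) \<in> Pr S" "K \<subseteq> Lft S x y" "card K = j"
          using a xyK unfolding B_def by auto
        have P: "x \<in> S" "y \<in> S" "x \<noteq> y" using z(2) unfolding Pr_def by auto
        have KS: "K \<subseteq> S" "\<forall>p\<in>K. ori x y p > 0" using z(3) unfolding Lft_def by auto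
        have xy: "x \<notin> K" "y \<notin> K" using KS by auto
        have fK: "finite K" using KS fin finite_subset by auto
        have "card (K \<union> {x,y}) = j + 2" using fK xy P z(4) by (simp add: card_insert_if)
        then have "K \<union> {x,y} \<in> Sub S (j+2)" unfolding Sub_def using KS P by auto
        moreover have "(x,y) \<in> HP (K \<union> {x,y})" unfolding HP_def using P KS by auto
        ultimately show "z \<in> A" unfolding A_def z(1) by auto
      qed
    qed
  qed
  also have "card B = (\<Sum>e\<in>Pr S. card (Lft S (fst e) (snd e)) choose j)"
  proof -
    have "card (SIGMA e:Pr S. {K. K \<subseteq> Lft S (fst e) (snd e) \<and> card K = j})
        = (\<Sum>e\<in>Pr S. card {K. K \<subseteq> Lft S (fst e) (snd e) \<and> card K = j})"
      by (rule card_SigmaI[OF finite_Pr[OF fin]]) (use fL in auto)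
    also have "\<dots> = (\<Sum>e\<in>Pr S. card (Lft S (fst e) (snd e)) choose j)"
      using n_subsets[OF fL] by simp
    finally show ?thesis unfolding B_def .
  qed
  finally show ?thesis .
qed



lemma sum_less_choose: "(\<Sum>i<m. i choose k) = m choose Suc k"
proof (cases m)
  case 0 then show ?thesis by simp
next
  case (Suc m') then show ?thesis using sum_choose_upper[of k m'] lessThan_Suc_atMost by simp
qed

lemma step1:
  assumes fin: "finite S" and gp: "gp S"
  shows "int (\<Sum>T\<in>Tri S. card (In S T) choose k)
       = int (\<Sum>e\<in>Pr S. card (Lft S (fst e) (snd e)) choose (k+1)) - 2 * int (card S choose (k+3))"
proof -
  have "int (\<Sum>T\<in>Tri S. card (In S T) choose k) = int (\<Sum>W\<in>Sub S (k+3). card (FT W))"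
    using momA[OF fin gp] by simp
  also have "\<dots> = (\<Sum>W\<in>Sub S (k+3). int (card (FT W)))" by simp
  also have "\<dots> = (\<Sum>W\<in>Sub S (k+3). int (card (HP W)) - 2)"
  proof (rule sum.cong[OF refl])
    fix W assume "W \<in> Sub S (k+3)"
    then have W: "W \<subseteq> S" "card W = k + 3" unfolding Sub_def by auto
    have "finite W" using W fin finite_subset by auto
    moreover have "gp W" using gp_mono[OF gp W(1)] .
    ultimately show "int (card (FT W)) = int (card (HP W)) - 2" using F_hull W(2) by simp
  qed
  also have "\<dots> = (\<Sum>W\<in>Sub S (k+3). int (card (HP W))) - 2 * int (card (Sub S (k+3)))"
    by (simp add: sum_subtractf)
  also have "(\<Sum>W\<in>Sub S (k+3). int (card (HP W))) = int (\<Sum>e\<in>Pr S. card (Lft S (fst e) (snd e)) choose (k+1))"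
  proof -
    have e: "k + 1 + 2 = k + 3" by simp
    have "(\<Sum>W\<in>Sub S (k+3). int (card (HP W))) = int (\<Sum>W\<in>Sub S (k+3). card (HP W))" by simp
    also have "\<dots> = int (\<Sum>e\<in>Pr S. card (Lft S (fst e) (snd e)) choose (k+1))"
      using momB[OF fin, of "k+1", unfolded e] by (simp only:)
    finally show ?thesis .
  qed
  also have "card (Sub S (k+3)) = card S choose (k+3)" unfolding Sub_def using n_subsets[OF fin] .
  finally show ?thesis .
qed

lemma In_bound: "finite S \<Longrightarrow> gp S \<Longrightarrow> T \<in> Tri S \<Longrightarrow> card (In S T) \<le> card S - 3"
proof -
  assume a: "finite S" "gp S" "T \<in> Tri S"
  have T: "T \<subseteq> S" "card T = 3" using a(3) unfolding Tri_def by auto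
  have "In S T \<subseteq> S - T" using In_disj[OF a(2,3)] unfolding In_def by auto
  then have "card (In S T) \<le> card (S - T)" using a(1) by (simp add: card_mono)
  also have "card (S - T) = card S - 3" using card_Diff_subset[OF finite_subset[OF T(1) a(1)] T(1)] T by simp
  finally show ?thesis .
qed

lemma step2:
  assumes fin: "finite S" and gp: "gp S"
  shows "(\<Sum>T\<in>Tri S. card (In S T) choose k)
       = (\<Sum>i\<le>card S - 3. card {T\<in>Tri S. card (In S T) = i} * (i choose k))"
proof -
  have "(\<Sum>T\<in>Tri S. card (In S T) choose k)
      = (\<Sum>i\<le>card S - 3. \<Sum>T\<in>{T\<in>Tri S. card (In S T) = i}. card (In S T) choose k)"
    by (rule sum.group[symmetric]) (use finite_Tri[OF fin] In_bound[OF fin gp] in auto)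
  also have "\<dots> = (\<Sum>i\<le>card S - 3. card {T\<in>Tri S. card (In S T) = i} * (i choose k))"
  proof (rule sum.cong[OF refl])
    fix i
    have "(\<Sum>T\<in>{T\<in>Tri S. card (In S T) = i}. card (In S T) choose k)
        = (\<Sum>T\<in>{T\<in>Tri S. card (In S T) = i}. i choose k)" by (rule sum.cong) auto
    then show "(\<Sum>T\<in>{T\<in>Tri S. card (In S T) = i}. card (In S T) choose k)
        = card {T\<in>Tri S. card (In S T) = i} * (i choose k)" by simp
  qed
  finally show ?thesis .
qed

lemma Lft_bound: "finite S \<Longrightarrow> e \<in> Pr S \<Longrightarrow> card (Lft S (fst e) (snd e)) \<le> card S - 2"
proof -
  assume a: "finite S" "e \<in> Pr S"
  obtain x y where e: "e = (x,y)" "x \<in> S" "y \<in> S" "x \<noteq> y" using a(2) unfolding Pr_def by auto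
  have "Lft S x y \<subseteq> S - {x,y}" unfolding Lft_def by auto
  then have "card (Lft S x y) \<le> card (S - {x,y})" using a(1) by (simp add: card_mono)
  also have "card (S - {x,y}) = card S - 2" using card_Diff_subset[of "{x,y}" S] e a(1) by simp
  finally show ?thesis using e by simp
qed

lemma step3:
  assumes fin: "finite S" and n3: "card S \<ge> 3"
  shows "(\<Sum>e\<in>Pr S. card (Lft S (fst e) (snd e)) choose (k+1))
       = (\<Sum>i\<le>card S - 3. card {e\<in>Pr S. i < card (Lft S (fst e) (snd e))} * (i choose k))"
proof -
  define N where "N = card S - 3"
  define lf where "lf e = card (Lft S (fst e) (snd e))" for e
  have lb: "lf e \<le> Suc N" if "e \<in> Pr S" for e using Lft_bound[OF fin that] n3 unfolding lf_def N_def by simp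
  have "(\<Sum>e\<in>Pr S. lf e choose (k+1)) = (\<Sum>e\<in>Pr S. \<Sum>i\<le>N. if i < lf e then i choose k else 0)"
  proof (rule sum.cong[OF refl])
    fix e assume e: "e \<in> Pr S"
    have "{i\<in>{..N}. i < lf e} = {..<lf e}" using lb[OF e] by auto
    then have "(\<Sum>i\<le>N. if i < lf e then i choose k else 0) = (\<Sum>i<lf e. i choose k)"
      using sum.inter_filter[of "{..N}" "\<lambda>i. i choose k" "\<lambda>i. i < lf e"] by simp
    then show "lf e choose (k+1) = (\<Sum>i\<le>N. if i < lf e then i choose k else 0)"
      using sum_less_choose[where m="lf e" and k=k] by simp
  qed
  also have "\<dots> = (\<Sum>i\<le>N. \<Sum>e\<in>Pr S. if i < lf e then i choose k else 0)" by (rule sum.swap)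
  also have "\<dots> = (\<Sum>i\<le>N. card {e\<in>Pr S. i < lf e} * (i choose k))"
  proof (rule sum.cong[OF refl])
    fix i
    have "(\<Sum>e\<in>Pr S. if i < lf e then i choose k else 0) = (\<Sum>e\<in>{e\<in>Pr S. i < lf e}. i choose k)"
      using sum.inter_filter[OF finite_Pr[OF fin], of "\<lambda>e. i choose k" "\<lambda>e. i < lf e"] by simp
    then show "(\<Sum>e\<in>Pr S. if i < lf e then i choose k else 0) = card {e\<in>Pr S. i < lf e} * (i choose k)"
      by simp
  qed
  finally show ?thesis unfolding lf_def N_def .
qed

lemma step4:
  assumes n3: "n \<ge> 3"
  shows "(\<Sum>i\<le>n - 3. ((n - 1 - i) choose 2) * (i choose k)) = n choose (k + 3)"
proof -
  have "(\<Sum>i\<le>n - 3. ((n - 1 - i) choose 2) * (i choose k)) = (\<Sum>i\<le>n - 1. ((n - 1 - i) choose 2) * (i choose k))"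
  proof (rule sum.mono_neutral_left)
    show "\<forall>i\<in>{..n - 1} - {..n - 3}. ((n - 1 - i) choose 2) * (i choose k) = 0"
    proof
      fix i assume "i \<in> {..n - 1} - {..n - 3}"
      then have "n - 1 - i < 2" using n3 by auto
      then show "((n - 1 - i) choose 2) * (i choose k) = 0" by simp
    qed
  qed auto
  also have "\<dots> = (\<Sum>i\<le>n - 1. (i choose k) * ((n - 1 - i) choose 2))" by (simp add: mult.commute)
  also have "\<dots> = Suc (n - 1) choose (k + 2 + 1)" by (rule vander_gen)
  also have "\<dots> = n choose (k + 3)"
  proof -
    have "Suc (n - 1) = n" using n3 by simp
    moreover have "k + 2 + 1 = k + 3" by simp
    ultimately show ?thesis by (simp only:)
  qed
  finally show ?thesis .
qed



lemma lf_swap: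
  assumes fin: "finite S" and gp: "gp S" and e: "a \<in> S" "b \<in> S" "a \<noteq> b"
  shows "card (Lft S a b) + card (Lft S b a) = card S - 2"
proof -
  have U: "Lft S a b \<union> Lft S b a = S - {a,b}"
  proof
    show "Lft S a b \<union> Lft S b a \<subseteq> S - {a,b}" unfolding Lft_def by auto
    show "S - {a,b} \<subseteq> Lft S a b \<union> Lft S b a"
    proof
      fix p assume p: "p \<in> S - {a,b}"
      then have "ori a b p \<noteq> 0" using gp_ori[OF gp e(1,2)] e by auto
      moreover have "ori b a p = - ori a b p" by (rule ori_swap)
      ultimately show "p \<in> Lft S a b \<union> Lft S b a" using p unfolding Lft_def by auto
    qed
  qed
  have D: "Lft S a b \<inter> Lft S b a = {}"
  proof -
    have "ori b a p = - ori a b p" for p by (rule ori_swap)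
    then show ?thesis unfolding Lft_def by auto
  qed
  have f: "finite (Lft S a b)" "finite (Lft S b a)" using fin unfolding Lft_def by auto
  have "card (Lft S a b) + card (Lft S b a) = card (S - {a,b})" using card_Un_disjoint[OF f D] U by simp
  also have "\<dots> = card S - 2" using card_Diff_subset[of "{a,b}" S] e fin by simp
  finally show ?thesis .
qed

lemma card_Pr: "finite S \<Longrightarrow> card (Pr S) = card S * (card S - 1)"
proof -
  assume fin: "finite S"
  have "Pr S = S \<times> S - (\<lambda>x. (x,x)) ` S" unfolding Pr_def by auto
  moreover have "card ((\<lambda>x. (x,x)) ` S) = card S" by (rule card_image) (auto intro: inj_onI)
  moreover have "(\<lambda>x. (x,x)) ` S \<subseteq> S \<times> S" by auto
  ultimately have "card (Pr S) = card S * card S - card S"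
    using card_Diff_subset[of "(\<lambda>x. (x,x)) ` S" "S \<times> S"] fin by (simp add: card_cartesian_product)
  then show ?thesis by (simp add: algebra_simps)
qed

lemma pair_part:
  assumes fin: "finite S" and gp: "gp S" and n3: "card S \<ge> 3" and i: "i \<le> card S - 3"
  shows "card {e\<in>Pr S. i < card (Lft S (fst e) (snd e))} + card {e\<in>Pr S. card S - 3 - i < card (Lft S (fst e) (snd e))}
     = card S * (card S - 1)"
proof -
  define n where "n = card S"
  define lf where "lf e = card (Lft S (fst e) (snd e))" for e
  have sw: "lf (b,a) = n - 2 - lf (a,b)" "lf (a,b) \<le> n - 2" if "(a,b) \<in> Pr S" for a b
  proof -
    have ab: "a \<in> S" "b \<in> S" "a \<noteq> b" using that unfolding Pr_def by auto
    show "lf (b,a) = n - 2 - lf (a,b)" "lf (a,b) \<le> n - 2"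
      using lf_swap[OF fin gp ab] unfolding lf_def n_def by auto
  qed
  have "card {e\<in>Pr S. n - 3 - i < lf e} = card {e\<in>Pr S. lf e \<le> i}"
  proof (rule bij_betw_same_card[of "\<lambda>(a,b). (b,a)"])
    show "bij_betw (\<lambda>(a,b). (b,a)) {e\<in>Pr S. n - 3 - i < lf e} {e\<in>Pr S. lf e \<le> i}"
    proof (rule bij_betw_byWitness[where f' = "\<lambda>(a,b). (b,a)"])
      show "\<forall>a\<in>{e\<in>Pr S. n - 3 - i < lf e}. (\<lambda>(a,b). (b,a)) ((\<lambda>(a,b). (b,a)) a) = a" by auto
      show "\<forall>a\<in>{e\<in>Pr S. lf e \<le> i}. (\<lambda>(a,b). (b,a)) ((\<lambda>(a,b). (b,a)) a) = a" by auto
      show "(\<lambda>(a,b). (b,a)) ` {e\<in>Pr S. n - 3 - i < lf e} \<subseteq> {e\<in>Pr S. lf e \<le> i}"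
      proof
        fix x assume "x \<in> (\<lambda>(a,b). (b,a)) ` {e\<in>Pr S. n - 3 - i < lf e}"
        then obtain a b where x: "x = (b,a)" "(a,b) \<in> Pr S" "n - 3 - i < lf (a,b)" by auto
        have "(b,a) \<in> Pr S" using x(2) unfolding Pr_def by auto
        moreover have "lf (b,a) \<le> i" using sw[OF x(2)] x(3) i n3 unfolding n_def by linarith
        ultimately show "x \<in> {e\<in>Pr S. lf e \<le> i}" using x(1) by simp
      qed
      show "(\<lambda>(a,b). (b,a)) ` {e\<in>Pr S. lf e \<le> i} \<subseteq> {e\<in>Pr S. n - 3 - i < lf e}"
      proof
        fix x assume "x \<in> (\<lambda>(a,b). (b,a)) ` {e\<in>Pr S. lf e \<le> i}"
        then obtain a b where x: "x = (a,b)" "(b,a) \<in> Pr S" "lf (b,a) \<le> i" by auto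
        have ab: "(a,b) \<in> Pr S" using x(2) unfolding Pr_def by auto
        have "n - 3 - i < lf (a,b)" using sw[OF ab] x(3) i n3 unfolding n_def by linarith
        then show "x \<in> {e\<in>Pr S. n - 3 - i < lf e}" using x(1) ab by simp
      qed
    qed
  qed
  moreover have "card {e\<in>Pr S. i < lf e} + card {e\<in>Pr S. lf e \<le> i} = card (Pr S)"
  proof -
    have "{e\<in>Pr S. i < lf e} \<union> {e\<in>Pr S. lf e \<le> i} = Pr S" by auto
    moreover have "{e\<in>Pr S. i < lf e} \<inter> {e\<in>Pr S. lf e \<le> i} = {}" by auto
    ultimately show ?thesis using card_Un_disjoint[of "{e\<in>Pr S. i < lf e}" "{e\<in>Pr S. lf e \<le> i}"]
      finite_Pr[OF fin] by simp
  qed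
  ultimately show ?thesis using card_Pr[OF fin] unfolding lf_def n_def by simp
qed

lemma cc_eq: "circle_count S i = card {T\<in>Tri S. card (In S T) = i}"
  unfolding circle_count_def circle_order_def Tri_def In_def ins_def by (rule arg_cong[where f = card]) auto

theorem mainTheorem5:
  fixes S :: "complex set" and n i :: nat
  assumes "finite S" and "card S = n" and "n \<ge> 3"
    and "general_position S"
    and "i \<le> n - 3"
  shows "circle_count S i + circle_count S (n - i - 3) = 2 * (i + 1) * (n - 2 - i)"
proof -
  note fin = assms(1)
  have gp: "gp S" using gp_general[OF assms(4)] .
  define N where "N = n - 3"
  define c where "c j = int (card {T\<in>Tri S. card (In S T) = j})" for j
  define E where "E j = int (card {e\<in>Pr S. j < card (Lft S (fst e) (snd e))})" for j
  define X where "X j = c j - E j + 2 * int ((n - 1 - j) choose 2)" for j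
  have mom: "(\<Sum>j\<le>N. X j * int (j choose k)) = 0" if "k \<le> N" for k
  proof -
    have s2: "(\<Sum>j\<le>N. c j * int (j choose k)) = int (\<Sum>T\<in>Tri S. card (In S T) choose k)"
      using step2[OF fin gp, of k] assms(2) unfolding c_def N_def by (simp add: of_nat_sum)
    have s3: "(\<Sum>j\<le>N. E j * int (j choose k)) = int (\<Sum>e\<in>Pr S. card (Lft S (fst e) (snd e)) choose (k+1))"
      using step3[OF fin, of k] assms(2,3) unfolding E_def N_def by (simp add: of_nat_sum)
    have s4: "(\<Sum>j\<le>N. int ((n - 1 - j) choose 2) * int (j choose k)) = int (n choose (k+3))"
    proof -
      have "int (\<Sum>j\<le>N. ((n - 1 - j) choose 2) * (j choose k)) = int (n choose (k+3))"
        using step4[OF assms(3), of k] unfolding N_def by simp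
      then show ?thesis by (simp add: of_nat_sum)
    qed
    have s1: "int (\<Sum>T\<in>Tri S. card (In S T) choose k)
       = int (\<Sum>e\<in>Pr S. card (Lft S (fst e) (snd e)) choose (k+1)) - 2 * int (n choose (k+3))"
      using step1[OF fin gp, of k] assms(2) by simp
    have "(\<Sum>j\<le>N. X j * int (j choose k)) = (\<Sum>j\<le>N. c j * int (j choose k)) - (\<Sum>j\<le>N. E j * int (j choose k))
        + 2 * (\<Sum>j\<le>N. int ((n - 1 - j) choose 2) * int (j choose k))"
    proof -
      have "(\<Sum>j\<le>N. X j * int (j choose k)) = (\<Sum>j\<le>N. c j * int (j choose k) - E j * int (j choose k)
          + 2 * (int ((n - 1 - j) choose 2) * int (j choose k)))"
        by (rule sum.cong[OF refl]) (simp add: X_def algebra_simps)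
      also have "\<dots> = (\<Sum>j\<le>N. c j * int (j choose k)) - (\<Sum>j\<le>N. E j * int (j choose k))
        + 2 * (\<Sum>j\<le>N. int ((n - 1 - j) choose 2) * int (j choose k))"
        by (simp only: sum.distrib sum_subtractf sum_distrib_left)
      finally show ?thesis .
    qed
    also have "\<dots> = 0" using s1 s2 s3 s4 by simp
    finally show ?thesis .
  qed
  have X0: "X j = 0" if "j \<le> N" for j using uniq_moments[of N X, OF mom that] .
  define m where "m = n - i - 3"
  have m: "n = i + 3 + m" using assms(5) assms(3) unfolding m_def by simp
  have im: "n - i - 3 = m" "N - i = m" "n - 2 - i = m + 1" "n - 1 - i = m + 2" "n - 1 - m = i + 2"
    using m unfolding N_def by auto
  have Xi: "X i = 0" using X0 assms(5) unfolding N_def by simp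
  have Xm: "X m = 0" using X0 m unfolding N_def by simp
  have pp: "E i + E m = int (n * (n - 1))"
    using pair_part[OF fin gp, of i] assms(2,3,5) im(2) unfolding E_def N_def by (simp flip: of_nat_add)
  have q1: "2 * int ((m + 2) choose 2) = int (m + 2) * int (m + 1)"
  proof -
    have h: "2 * ((m + 2) choose 2) = (m + 2) * (m + 1)" using choose2_nat[of "m+2"] by simp
    then have "int (2 * ((m + 2) choose 2)) = int ((m + 2) * (m + 1))" by (simp only:)
    then show ?thesis by (simp only: of_nat_mult of_nat_numeral)
  qed
  have q2: "2 * int ((i + 2) choose 2) = int (i + 2) * int (i + 1)"
  proof -
    have h: "2 * ((i + 2) choose 2) = (i + 2) * (i + 1)" using choose2_nat[of "i+2"] by simp
    then have "int (2 * ((i + 2) choose 2)) = int ((i + 2) * (i + 1))" by (simp only:)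
    then show ?thesis by (simp only: of_nat_mult of_nat_numeral)
  qed
  have "c i + c m = E i + E m - 2 * int ((m + 2) choose 2) - 2 * int ((i + 2) choose 2)"
    using Xi Xm im unfolding X_def by simp
  also have "\<dots> = int (2 * (i + 1) * (m + 1))"
    unfolding pp q1 q2 m by (simp add: algebra_simps)
  finally have "c i + c m = int (2 * (i + 1) * (m + 1))" .
  then have "circle_count S i + circle_count S m = 2 * (i + 1) * (m + 1)"
    unfolding c_def cc_eq by (simp flip: of_nat_add)
  then show ?thesis using im by simp
qed


end
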